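(* Let $A$ be a basic connected finite dimensional algebra over an algebraically closed field $k$ with ordinary quiver $Q$ without oriented cycles, and assume $A$ is constricted, i.e. $\dim_k e_yAe_x=1$ for every arrow $x\to y$ of $Q$. Let $\nu\colon kQ\twoheadrightarrow A$ be any presentation and $I=\mathsf{Ker}(\nu)$. Then $\theta_\nu\colon\mathsf{Hom}(\pi_1(Q,I),k^+)\to\mathsf{HH}^1(A)$ is an isomorphism. In particular $\mathsf{HH}^1(A)$ is an abelian Lie algebra.
   Context: Fix a complete set $e_1,\dots,e_n$ of primitive orthogonal idempotents of $A$ indexed by $Q_0=\{1,\dots,n\}$, $E=\bigoplus ke_i$. A presentation is a surjective algebra map $\nu\colon kQ\twoheadrightarrow A$ with admissible kernel ($(kQ^+)^N\subseteq\mathsf{Ker}\,\nu\subseteq(kQ^+)^2$ for some $N\ge2$, $kQ^+$ the arrow ideal) and $\nu(e_i)=e_i$. $\mathsf{HH}^1(A)=Der_0(A)/Int_0(A)$, with $Der_0(A)$ the derivations vanishing on all $e_i$ (commutator bracket) and $Int_0(A)=\{a\mapsto ea-ae\mid e\in E\}$. Walks: paths in $Q$ with formal inverse arrows allowed. $\sim_I$ is the smallest equivalence relation on walks with $\alpha\alpha^{-1}\sim_I e_y$, $\alpha^{-1}\alpha\sim_I e_x$ for arrows $\alpha\colon x\to y$, compatible with concatenation, and identifying two paths occurring with nonzero coefficient in a same minimal relation of $I$ (a nonzero $\sum t_iu_i\in I$, $t_i\neq0$, distinct paths, no nonempty proper subsum in $I$). $\pi_1(Q,I)$ is the group of classes of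 closed walks at a fixed vertex $x_0$. Fix a maximal tree $T$ of $Q$, $\gamma_x$ the minimal walk in $T$ from $x_0$ to $x$. For a group homomorphism $f\colon\pi_1(Q,I)\to k^+$, $\theta_\nu(f)$ is the class of the derivation $\tilde f$ with $\tilde f(\nu(u))=f([\gamma_y^{-1}u\gamma_x]_I)\nu(u)$ for paths $u$ from $x$ to $y$. *)

theory Defs
  imports "HOL-Computational_Algebra.Polynomial" "HOL-Algebra.Group"
begin

text \<open>A path is a pair (x, as): start vertex x and list of arrows in order of
traversal (as = [] is the trivial path e_x).\<close>

definition quiver :: "'v set \<Rightarrow> 'e set \<Rightarrow> ('e \<Rightarrow> 'v) \<Rightarrow> ('e \<Rightarrow> 'v) \<Rightarrow> bool" where
  "quiver Q0 Q1 s t \<longleftrightarrow> finite Q0 \<and> Q0 \<noteq> {} \<and> finite Q1 \<and> (\<forall>a\<in>Q1. s a \<in> Q0 \<and> t a \<in> Q0)"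

fun chain :: "('e \<Rightarrow> 'v) \<Rightarrow> ('e \<Rightarrow> 'v) \<Rightarrow> 'v \<Rightarrow> 'e list \<Rightarrow> bool" where
  "chain s t x [] = True"
| "chain s t x (a # as) = (s a = x \<and> chain s t (t a) as)"

definition is_path :: "'v set \<Rightarrow> 'e set \<Rightarrow> ('e \<Rightarrow> 'v) \<Rightarrow> ('e \<Rightarrow> 'v) \<Rightarrow> 'v \<times> 'e list \<Rightarrow> bool" where
  "is_path Q0 Q1 s t p \<longleftrightarrow> fst p \<in> Q0 \<and> set (snd p) \<subseteq> Q1 \<and> chain s t (fst p) (snd p)"

fun ptgt :: "('e \<Rightarrow> 'v) \<Rightarrow> 'v \<times> 'e list \<Rightarrow> 'v" where
  "ptgt t (x, as) = (if as = [] then x else t (last as))"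

definition acyclic_quiver :: "'v set \<Rightarrow> 'e set \<Rightarrow> ('e \<Rightarrow> 'v) \<Rightarrow> ('e \<Rightarrow> 'v) \<Rightarrow> bool" where
  "acyclic_quiver Q0 Q1 s t \<longleftrightarrow>
     (\<forall>p. is_path Q0 Q1 s t p \<and> snd p \<noteq> [] \<longrightarrow> ptgt t p \<noteq> fst p)"

text \<open>Walks: start vertex and list of steps (arrow, True) = arrow traversed forwards,
(arrow, False) = formal inverse of the arrow.  Steps are listed in order of traversal.\<close>
type_synonym ('v,'e) walk = "'v \<times> ('e \<times> bool) list"

fun step_src :: "('e \<Rightarrow> 'v) \<Rightarrow> ('e \<Rightarrow> 'v) \<Rightarrow> 'e \<times> bool \<Rightarrow> 'v" where
  "step_src s t (a, b) = (if b then s a else t a)"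

fun step_tgt :: "('e \<Rightarrow> 'v) \<Rightarrow> ('e \<Rightarrow> 'v) \<Rightarrow> 'e \<times> bool \<Rightarrow> 'v" where
  "step_tgt s t (a, b) = (if b then t a else s a)"

fun wchain :: "('e \<Rightarrow> 'v) \<Rightarrow> ('e \<Rightarrow> 'v) \<Rightarrow> 'v \<Rightarrow> ('e \<times> bool) list \<Rightarrow> bool" where
  "wchain s t x [] = True"
| "wchain s t x (st # sts) = (step_src s t st = x \<and> wchain s t (step_tgt s t st) sts)"

definition is_walk :: "'v set \<Rightarrow> 'e set \<Rightarrow> ('e \<Rightarrow> 'v) \<Rightarrow> ('e \<Rightarrow> 'v) \<Rightarrow> ('v,'e) walk \<Rightarrow> bool" where
  "is_walk Q0 Q1 s t w \<longleftrightarrow> fst w \<in> Q0 \<and> fst ` set (snd w) \<subseteq> Q1 \<and> wchain s t (fst w) (snd w)"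

fun wtgt :: "('e \<Rightarrow> 'v) \<Rightarrow> ('e \<Rightarrow> 'v) \<Rightarrow> ('v,'e) walk \<Rightarrow> 'v" where
  "wtgt s t (x, sts) = (if sts = [] then x else step_tgt s t (last sts))"

text \<open>Concatenation: first traverse w1, then w2 (meaningful when wtgt w1 = fst w2).\<close>
definition wconcat :: "('v,'e) walk \<Rightarrow> ('v,'e) walk \<Rightarrow> ('v,'e) walk" where
  "wconcat w1 w2 = (fst w1, snd w1 @ snd w2)"

definition winv :: "('e \<Rightarrow> 'v) \<Rightarrow> ('e \<Rightarrow> 'v) \<Rightarrow> ('v,'e) walk \<Rightarrow> ('v,'e) walk" where
  "winv s t w = (wtgt s t w, rev (map (\<lambda>(a, b). (a, \<not> b)) (snd w)))"

definition path_walk :: "'v \<times> 'e list \<Rightarrow> ('v,'e) walk" where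
  "path_walk p = (fst p, map (\<lambda>a. (a, True)) (snd p))"

definition connected_quiver :: "'v set \<Rightarrow> 'e set \<Rightarrow> ('e \<Rightarrow> 'v) \<Rightarrow> ('e \<Rightarrow> 'v) \<Rightarrow> bool" where
  "connected_quiver Q0 Q1 s t \<longleftrightarrow>
     (\<forall>x\<in>Q0. \<forall>y\<in>Q0. \<exists>w. is_walk Q0 Q1 s t w \<and> fst w = x \<and> wtgt s t w = y)"

definition reduced :: "('e \<times> bool) list \<Rightarrow> bool" where
  "reduced sts \<longleftrightarrow> (\<forall>i. Suc i < length sts \<longrightarrow>
      \<not> (fst (sts ! i) = fst (sts ! Suc i) \<and> snd (sts ! i) \<noteq> snd (sts ! Suc i)))"

definition maximal_tree :: "'v set \<Rightarrow> 'e set \<Rightarrow> ('e \<Rightarrow> 'v) \<Rightarrow> ('e \<Rightarrow> 'v) \<Rightarrow> 'e set \<Rightarrow> bool" where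
  "maximal_tree Q0 Q1 s t T \<longleftrightarrow> T \<subseteq> Q1 \<and> connected_quiver Q0 T s t \<and>
     (\<forall>w. is_walk Q0 T s t w \<and> wtgt s t w = fst w \<and> reduced (snd w) \<longrightarrow> snd w = [])"

text \<open>Elements of kQ are coefficient functions on paths, supported on valid paths.\<close>
type_synonym ('v,'e,'k) pelem = "'v \<times> 'e list \<Rightarrow> 'k"

definition pathalg :: "'v set \<Rightarrow> 'e set \<Rightarrow> ('e \<Rightarrow> 'v) \<Rightarrow> ('e \<Rightarrow> 'v) \<Rightarrow> ('v,'e,'k::zero) pelem set" where
  "pathalg Q0 Q1 s t = {a. \<forall>p. a p \<noteq> 0 \<longrightarrow> is_path Q0 Q1 s t p}"

definition pbasis :: "'v \<times> 'e list \<Rightarrow> ('v,'e,'k::{zero,one}) pelem" where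
  "pbasis p = (\<lambda>q. if q = p then 1 else 0)"

definition padd :: "('v,'e,'k::plus) pelem \<Rightarrow> ('v,'e,'k) pelem \<Rightarrow> ('v,'e,'k) pelem" where
  "padd a b = (\<lambda>p. a p + b p)"

definition psmult :: "'k::times \<Rightarrow> ('v,'e,'k) pelem \<Rightarrow> ('v,'e,'k) pelem" where
  "psmult c a = (\<lambda>p. c * a p)"

text \<open>Multiplication: for paths u, v the product u v is "first v, then u" (nonzero iff the
target of v is the source of u), so that a path u from x to y satisfies u = e_y u e_x.\<close>
definition pmult :: "'v set \<Rightarrow> 'e set \<Rightarrow> ('e \<Rightarrow> 'v) \<Rightarrow> ('e \<Rightarrow> 'v) \<Rightarrow>
    ('v,'e,'k::comm_ring_1) pelem \<Rightarrow> ('v,'e,'k) pelem \<Rightarrow> ('v,'e,'k) pelem" where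
  "pmult Q0 Q1 s t a b = (\<lambda>(x, as). if is_path Q0 Q1 s t (x, as) then
      (\<Sum>i\<le>length as. a (ptgt t (x, take i as), drop i as) * b (x, take i as)) else 0)"

definition pone :: "'v set \<Rightarrow> ('v,'e,'k::{zero,one}) pelem" where
  "pone Q0 = (\<lambda>p. if fst p \<in> Q0 \<and> snd p = [] then 1 else 0)"

text \<open>(kQ^+)^N: the span of the paths of length at least N.\<close>
definition arrow_ideal_pow :: "'v set \<Rightarrow> 'e set \<Rightarrow> ('e \<Rightarrow> 'v) \<Rightarrow> ('e \<Rightarrow> 'v) \<Rightarrow> nat \<Rightarrow> ('v,'e,'k::zero) pelem set" where
  "arrow_ideal_pow Q0 Q1 s t N = {a \<in> pathalg Q0 Q1 s t. \<forall>p. a p \<noteq> 0 \<longrightarrow> length (snd p) \<ge> N}"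

definition k_algebra :: "('k::field \<Rightarrow> 'a::ring_1 \<Rightarrow> 'a) \<Rightarrow> bool" where
  "k_algebra sc \<longleftrightarrow> vector_space sc \<and>
     (\<forall>c a b. sc c (a * b) = sc c a * b \<and> sc c (a * b) = a * sc c b)"

definition presentation :: "'v set \<Rightarrow> 'e set \<Rightarrow> ('e \<Rightarrow> 'v) \<Rightarrow> ('e \<Rightarrow> 'v) \<Rightarrow>
    ('k::field \<Rightarrow> 'a::ring_1 \<Rightarrow> 'a) \<Rightarrow> (('v,'e,'k) pelem \<Rightarrow> 'a) \<Rightarrow> bool" where
  "presentation Q0 Q1 s t sc \<nu> \<longleftrightarrow>
     (\<forall>a\<in>pathalg Q0 Q1 s t. \<forall>b\<in>pathalg Q0 Q1 s t.
        \<nu> (padd a b) = \<nu> a + \<nu> b \<and> \<nu> (pmult Q0 Q1 s t a b) = \<nu> a * \<nu> b) \<and>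
     (\<forall>c. \<forall>a\<in>pathalg Q0 Q1 s t. \<nu> (psmult c a) = sc c (\<nu> a)) \<and>
     \<nu> (pone Q0) = 1 \<and>
     \<nu> ` pathalg Q0 Q1 s t = UNIV"

definition pkernel :: "'v set \<Rightarrow> 'e set \<Rightarrow> ('e \<Rightarrow> 'v) \<Rightarrow> ('e \<Rightarrow> 'v) \<Rightarrow>
    (('v,'e,'k::zero) pelem \<Rightarrow> 'a::zero) \<Rightarrow> ('v,'e,'k) pelem set" where
  "pkernel Q0 Q1 s t \<nu> = {a \<in> pathalg Q0 Q1 s t. \<nu> a = 0}"

definition admissible :: "'v set \<Rightarrow> 'e set \<Rightarrow> ('e \<Rightarrow> 'v) \<Rightarrow> ('e \<Rightarrow> 'v) \<Rightarrow> ('v,'e,'k::zero) pelem set \<Rightarrow> bool" where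
  "admissible Q0 Q1 s t I \<longleftrightarrow> (\<exists>N\<ge>2. arrow_ideal_pow Q0 Q1 s t N \<subseteq> I \<and> I \<subseteq> arrow_ideal_pow Q0 Q1 s t 2)"

definition idem :: "(('v,'e,'k::{zero,one}) pelem \<Rightarrow> 'a) \<Rightarrow> 'v \<Rightarrow> 'a" where
  "idem \<nu> x = \<nu> (pbasis (x, []))"

definition constricted :: "'v set \<Rightarrow> 'e set \<Rightarrow> ('e \<Rightarrow> 'v) \<Rightarrow> ('e \<Rightarrow> 'v) \<Rightarrow>
    ('k::field \<Rightarrow> 'a::ring_1 \<Rightarrow> 'a) \<Rightarrow> (('v,'e,'k) pelem \<Rightarrow> 'a) \<Rightarrow> bool" where
  "constricted Q0 Q1 s t sc \<nu> \<longleftrightarrow>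
     (\<forall>\<alpha>\<in>Q1. vector_space.dim sc {idem \<nu> (t \<alpha>) * a * idem \<nu> (s \<alpha>) | a. True} = 1)"

definition minimal_relation :: "'v set \<Rightarrow> 'e set \<Rightarrow> ('e \<Rightarrow> 'v) \<Rightarrow> ('e \<Rightarrow> 'v) \<Rightarrow>
    ('v,'e,'k::zero) pelem set \<Rightarrow> ('v,'e,'k) pelem \<Rightarrow> bool" where
  "minimal_relation Q0 Q1 s t I \<rho> \<longleftrightarrow> \<rho> \<in> I \<and> \<rho> \<noteq> (\<lambda>_. 0) \<and>
     (\<forall>S. S \<noteq> {} \<and> S \<subset> {p. \<rho> p \<noteq> 0} \<longrightarrow> (\<lambda>p. if p \<in> S then \<rho> p else 0) \<notin> I)"

inductive homot :: "'v set \<Rightarrow> 'e set \<Rightarrow> ('e \<Rightarrow> 'v) \<Rightarrow> ('e \<Rightarrow> 'v) \<Rightarrow>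
    ('v,'e,'k::zero) pelem set \<Rightarrow> ('v,'e) walk \<Rightarrow> ('v,'e) walk \<Rightarrow> bool"
  for Q0 Q1 s t I where
  h_refl: "is_walk Q0 Q1 s t w \<Longrightarrow> homot Q0 Q1 s t I w w"
| h_sym: "homot Q0 Q1 s t I w w' \<Longrightarrow> homot Q0 Q1 s t I w' w"
| h_trans: "homot Q0 Q1 s t I w w' \<Longrightarrow> homot Q0 Q1 s t I w' w'' \<Longrightarrow> homot Q0 Q1 s t I w w''"
| h_inv1: "\<alpha> \<in> Q1 \<Longrightarrow> homot Q0 Q1 s t I (t \<alpha>, [(\<alpha>, False), (\<alpha>, True)]) (t \<alpha>, [])"
| h_inv2: "\<alpha> \<in> Q1 \<Longrightarrow> homot Q0 Q1 s t I (s \<alpha>, [(\<alpha>, True), (\<alpha>, False)]) (s \<alpha>, [])"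
| h_concat: "homot Q0 Q1 s t I w w' \<Longrightarrow> is_walk Q0 Q1 s t a \<Longrightarrow> is_walk Q0 Q1 s t b \<Longrightarrow>
     wtgt s t a = fst w \<Longrightarrow> wtgt s t w = fst b \<Longrightarrow>
     homot Q0 Q1 s t I (wconcat (wconcat a w) b) (wconcat (wconcat a w') b)"
| h_rel: "minimal_relation Q0 Q1 s t I \<rho> \<Longrightarrow> \<rho> u \<noteq> 0 \<Longrightarrow> \<rho> v \<noteq> 0 \<Longrightarrow>
     homot Q0 Q1 s t I (path_walk u) (path_walk v)"

definition hclass :: "'v set \<Rightarrow> 'e set \<Rightarrow> ('e \<Rightarrow> 'v) \<Rightarrow> ('e \<Rightarrow> 'v) \<Rightarrow>
    ('v,'e,'k::zero) pelem set \<Rightarrow> ('v,'e) walk \<Rightarrow> ('v,'e) walk set" where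
  "hclass Q0 Q1 s t I w = {w'. homot Q0 Q1 s t I w' w}"

text \<open>pi_1(Q,I) at the base vertex x0, as a HOL-Algebra monoid record (it is a group).\<close>
definition pi1 :: "'v set \<Rightarrow> 'e set \<Rightarrow> ('e \<Rightarrow> 'v) \<Rightarrow> ('e \<Rightarrow> 'v) \<Rightarrow>
    ('v,'e,'k::zero) pelem set \<Rightarrow> 'v \<Rightarrow> ('v,'e) walk set monoid" where
  "pi1 Q0 Q1 s t I x0 =
    \<lparr> carrier = {hclass Q0 Q1 s t I w | w. is_walk Q0 Q1 s t w \<and> fst w = x0 \<and> wtgt s t w = x0},
      mult = (\<lambda>X Y. {w. \<exists>a\<in>X. \<exists>b\<in>Y. homot Q0 Q1 s t I w (wconcat a b)}),
      one = hclass Q0 Q1 s t I (x0, []) \<rparr>"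

definition kplus :: "'k::ab_group_add monoid" where
  "kplus = \<lparr> carrier = UNIV, mult = (+), one = 0 \<rparr>"

definition Der0 :: "'v set \<Rightarrow> ('k::field \<Rightarrow> 'a::ring_1 \<Rightarrow> 'a) \<Rightarrow> (('v,'e,'k) pelem \<Rightarrow> 'a) \<Rightarrow> ('a \<Rightarrow> 'a) set" where
  "Der0 Q0 sc \<nu> = {D. (\<forall>a b. D (a + b) = D a + D b) \<and> (\<forall>c a. D (sc c a) = sc c (D a)) \<and>
      (\<forall>a b. D (a * b) = D a * b + a * D b) \<and> (\<forall>x\<in>Q0. D (idem \<nu> x) = 0)}"

definition Eset :: "'v set \<Rightarrow> ('k::field \<Rightarrow> 'a::ring_1 \<Rightarrow> 'a) \<Rightarrow> (('v,'e,'k) pelem \<Rightarrow> 'a) \<Rightarrow> 'a set" where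
  "Eset Q0 sc \<nu> = {\<Sum>x\<in>Q0. sc (c x) (idem \<nu> x) | c. True}"

definition Int0 :: "'v set \<Rightarrow> ('k::field \<Rightarrow> 'a::ring_1 \<Rightarrow> 'a) \<Rightarrow> (('v,'e,'k) pelem \<Rightarrow> 'a) \<Rightarrow> ('a \<Rightarrow> 'a) set" where
  "Int0 Q0 sc \<nu> = {(\<lambda>a. e * a - a * e) | e. e \<in> Eset Q0 sc \<nu>}"

definition der_class :: "'v set \<Rightarrow> ('k::field \<Rightarrow> 'a::ring_1 \<Rightarrow> 'a) \<Rightarrow> (('v,'e,'k) pelem \<Rightarrow> 'a) \<Rightarrow>
    ('a \<Rightarrow> 'a) \<Rightarrow> ('a \<Rightarrow> 'a) set" where
  "der_class Q0 sc \<nu> D = {D' \<in> Der0 Q0 sc \<nu>. (\<lambda>a. D' a - D a) \<in> Int0 Q0 sc \<nu>}"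

text \<open>HH^1(A) = Der_0(A)/Int_0(A), as the set of cosets.\<close>
definition HH1 :: "'v set \<Rightarrow> ('k::field \<Rightarrow> 'a::ring_1 \<Rightarrow> 'a) \<Rightarrow> (('v,'e,'k) pelem \<Rightarrow> 'a) \<Rightarrow> ('a \<Rightarrow> 'a) set set" where
  "HH1 Q0 sc \<nu> = der_class Q0 sc \<nu> ` Der0 Q0 sc \<nu>"

text \<open>theta_nu(f) is the class of the derivation f~ with
f~(nu(u)) = f([gamma_y^{-1} u gamma_x]) nu(u) for every path u from x to y
(the closed walk traverses gamma_x, then u, then gamma_y backwards).\<close>
definition theta :: "'v set \<Rightarrow> 'e set \<Rightarrow> ('e \<Rightarrow> 'v) \<Rightarrow> ('e \<Rightarrow> 'v) \<Rightarrow>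
    ('k::field \<Rightarrow> 'a::ring_1 \<Rightarrow> 'a) \<Rightarrow> (('v,'e,'k) pelem \<Rightarrow> 'a) \<Rightarrow> ('v \<Rightarrow> ('v,'e) walk) \<Rightarrow>
    (('v,'e) walk set \<Rightarrow> 'k) \<Rightarrow> ('a \<Rightarrow> 'a) set" where
  "theta Q0 Q1 s t sc \<nu> \<gamma> f =
     {D \<in> Der0 Q0 sc \<nu>. \<exists>D0 \<in> Der0 Q0 sc \<nu>.
        (\<forall>u. is_path Q0 Q1 s t u \<longrightarrow>
           D0 (\<nu> (pbasis u)) =
             sc (f (hclass Q0 Q1 s t (pkernel Q0 Q1 s t \<nu>)
                    (wconcat (wconcat (\<gamma> (fst u)) (path_walk u)) (winv s t (\<gamma> (ptgt t u))))))
                (\<nu> (pbasis u))) \<and>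
        (\<lambda>a. D a - D0 a) \<in> Int0 Q0 sc \<nu>}"

end

theory Submission
  imports Defs
begin

lemma chain_append: "chain s t x (as @ bs) = (chain s t x as \<and> chain s t (ptgt t (x, as)) bs)"
  by (induction as arbitrary: x) auto

lemma ptgt_append: "ptgt t (x, as @ bs) = ptgt t (ptgt t (x, as), bs)"
  by (cases bs rule: rev_cases) auto

lemma wchain_append: "wchain s t x (as @ bs) = (wchain s t x as \<and> wchain s t (wtgt s t (x, as)) bs)"
  by (induction as arbitrary: x) auto

lemma wtgt_append: "wtgt s t (x, as @ bs) = wtgt s t (wtgt s t (x, as), bs)"
  by (cases bs rule: rev_cases) auto

locale qs =
  fixes Q0 :: "'v set" and Q1 :: "'e set" and s t :: "'e \<Rightarrow> 'v"
    and sc :: "'k::field \<Rightarrow> 'a::ring_1 \<Rightarrow> 'a" and \<nu> :: "('v,'e,'k) pelem \<Rightarrow> 'a"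
  assumes quiv: "quiver Q0 Q1 s t"
    and acyc: "acyclic_quiver Q0 Q1 s t"
    and alg: "k_algebra sc"
    and pres: "presentation Q0 Q1 s t sc \<nu>"
    and adm: "admissible Q0 Q1 s t (pkernel Q0 Q1 s t \<nu>)"
begin

sublocale vs: vector_space sc using alg by (simp add: k_algebra_def)

abbreviation "path \<equiv> is_path Q0 Q1 s t"
abbreviation "walk \<equiv> is_walk Q0 Q1 s t"
abbreviation "I \<equiv> pkernel Q0 Q1 s t \<nu>"
abbreviation PA :: "('v,'e,'k) pelem set" where "PA \<equiv> pathalg Q0 Q1 s t"
abbreviation "PS \<equiv> {p. path p}"
abbreviation "b u \<equiv> \<nu> (pbasis u)"
abbreviation "e x \<equiv> idem \<nu> x"

lemma sc_mult_left: "sc c (x * y) = sc c x * y" using alg by (simp add: k_algebra_def)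
lemma sc_mult_right: "sc c (x * y) = x * sc c y" using alg unfolding k_algebra_def by metis

lemma fin_Q0: "finite Q0" and fin_Q1: "finite Q1" and st_Q0: "a \<in> Q1 \<Longrightarrow> s a \<in> Q0 \<and> t a \<in> Q0"
  using quiv by (auto simp: quiver_def)

lemma path_ptgt: "path p \<Longrightarrow> ptgt t p \<in> Q0"
proof -
  assume p: "path p"
  obtain x as where xa: "p = (x, as)" by (cases p)
  show ?thesis
  proof (cases "as = []")
    case True thus ?thesis using p xa by (simp add: is_path_def)
  next
    case False
    hence "last as \<in> Q1" using p xa by (auto simp: is_path_def)
    thus ?thesis using False xa st_Q0 by simp
  qed
qed

lemma path_append: "path (x, as @ bs) = (path (x, as) \<and> path (ptgt t (x, as), bs))"
  using path_ptgt[of "(x,as)"] by (auto simp: is_path_def chain_append)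

lemma path_length: assumes "path (x, as)" shows "length as < card Q0"
proof -
  define vtx where "vtx i = ptgt t (x, take i as)" for i
  have inj: "inj_on vtx {0..length as}"
  proof (rule inj_onI, rule ccontr)
    fix i j assume ij: "i \<in> {0..length as}" "j \<in> {0..length as}" "vtx i = vtx j" "i \<noteq> j"
    have "\<exists>i j. i < j \<and> j \<le> length as \<and> vtx i = vtx j"
      using ij by (metis atLeastAtMost_iff linorder_neqE_nat)
    then obtain i j where ij2: "i < j" "j \<le> length as" "vtx i = vtx j" by blast
    have decomp: "as = take i as @ take (j - i) (drop i as) @ drop j as"
      using ij2 by (metis append.assoc append_take_drop_id le_add_diff_inverse less_imp_le_nat take_add)
    have tj: "take j as = take i as @ take (j - i) (drop i as)"
      using ij2 by (metis le_add_diff_inverse less_imp_le_nat take_add)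
    have p1: "path (vtx i, take (j - i) (drop i as))"
      using assms decomp unfolding vtx_def by (metis path_append)
    have ne: "take (j - i) (drop i as) \<noteq> []" using ij2 by simp
    have "ptgt t (vtx i, take (j - i) (drop i as)) = vtx j"
      unfolding vtx_def tj ptgt_append by simp
    with acyc p1 ne ij2(3) show False unfolding acyclic_quiver_def by auto
  qed
  have "vtx ` {0..length as} \<subseteq> Q0"
  proof
    fix y assume "y \<in> vtx ` {0..length as}"
    then obtain i where "i \<le> length as" "y = vtx i" by auto
    moreover have "path (x, take i as)" using assms
      by (metis append_take_drop_id path_append)
    ultimately show "y \<in> Q0" unfolding vtx_def using path_ptgt by metis
  qed
  hence "card (vtx ` {0..length as}) \<le> card Q0" by (simp add: card_mono fin_Q0)
  with inj show ?thesis by (simp add: card_image)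
qed

lemma finite_PS: "finite PS"
proof -
  have "PS \<subseteq> Q0 \<times> {as. set as \<subseteq> Q1 \<and> length as \<le> card Q0}"
    using path_length by (fastforce simp: is_path_def)
  moreover have "finite (Q0 \<times> {as. set as \<subseteq> Q1 \<and> length as \<le> card Q0})"
    using fin_Q0 fin_Q1 by (simp add: finite_lists_length_le)
  ultimately show ?thesis by (rule finite_subset)
qed


lemma pres_add: "a \<in> PA \<Longrightarrow> b' \<in> PA \<Longrightarrow> \<nu> (padd a b') = \<nu> a + \<nu> b'"
  using pres by (simp add: presentation_def)
lemma pres_mult: "a \<in> PA \<Longrightarrow> b' \<in> PA \<Longrightarrow> \<nu> (pmult Q0 Q1 s t a b') = \<nu> a * \<nu> b'"
  using pres by (simp add: presentation_def)
lemma pres_smult: "a \<in> PA \<Longrightarrow> \<nu> (psmult c a) = sc c (\<nu> a)"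
  using pres by (simp add: presentation_def)
lemma pres_surj: "\<exists>x\<in>PA. \<nu> x = a"
proof -
  have "a \<in> \<nu> ` PA" using pres unfolding presentation_def by simp
  thus ?thesis by blast
qed

lemma PA_iff: "a \<in> PA \<longleftrightarrow> (\<forall>p. a p \<noteq> 0 \<longrightarrow> path p)"
  by (simp add: pathalg_def)

lemma zero_PA[simp]: "(\<lambda>_. 0) \<in> PA" unfolding PA_iff by simp
lemma padd_PA[simp]: assumes "a \<in> PA" "b' \<in> PA" shows "padd a b' \<in> PA"
  unfolding PA_iff padd_def
proof (intro allI impI)
  fix p assume "a p + b' p \<noteq> 0"
  hence "a p \<noteq> 0 \<or> b' p \<noteq> 0" by auto
  thus "path p" using assms by (auto simp only: PA_iff)
qed
lemma psmult_PA[simp]: "a \<in> PA \<Longrightarrow> psmult c a \<in> PA"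
  unfolding psmult_def
proof (subst PA_iff, intro allI impI)
  fix p assume "a \<in> PA" "c * a p \<noteq> 0"
  hence "a p \<noteq> 0" by auto
  thus "path p" using \<open>a \<in> PA\<close> by (auto simp only: PA_iff)
qed
lemma pbasis_PA[simp]: "path p \<Longrightarrow> pbasis p \<in> PA"
  unfolding PA_iff pbasis_def by (simp split: if_splits)
lemma restr_PA[simp]: "a \<in> PA \<Longrightarrow> (\<lambda>p. if P p then a p else 0) \<in> PA"
proof (subst PA_iff, intro allI impI)
  fix p assume "a \<in> PA" "(if P p then a p else 0) \<noteq> 0"
  hence "a p \<noteq> 0" by (auto split: if_splits)
  thus "path p" using \<open>a \<in> PA\<close> by (auto simp only: PA_iff)
qed
lemma fmult_PA[simp]: "a \<in> PA \<Longrightarrow> (\<lambda>p. F p * a p) \<in> PA"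
proof (subst PA_iff, intro allI impI)
  fix p assume "a \<in> PA" "F p * a p \<noteq> 0"
  hence "a p \<noteq> 0" by auto
  thus "path p" using \<open>a \<in> PA\<close> by (auto simp only: PA_iff)
qed
lemma pmult_PA[simp]: "pmult Q0 Q1 s t a b' \<in> PA"
  unfolding PA_iff
proof (intro allI impI)
  fix p assume "pmult Q0 Q1 s t a b' p \<noteq> 0"
  thus "path p" by (cases p) (simp add: pmult_def split: if_splits)
qed

lemma nu_zero[simp]: "\<nu> (\<lambda>_. 0) = 0"
proof -
  have "\<nu> (padd (\<lambda>_. 0) (\<lambda>_. 0)) = \<nu> (\<lambda>_. 0) + \<nu> (\<lambda>_. 0)" by (rule pres_add) auto
  thus ?thesis by (simp add: padd_def)
qed

lemma supp_PS: "a \<in> PA \<Longrightarrow> {p. a p \<noteq> 0} \<subseteq> PS" unfolding PA_iff by blast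

lemma nu_expand_gen:
  assumes "finite S" "S \<subseteq> PS" "\<forall>p. a p \<noteq> 0 \<longrightarrow> p \<in> S"
  shows "\<nu> a = (\<Sum>p\<in>S. sc (a p) (b p))"
  using assms
proof (induction S arbitrary: a rule: finite_induct)
  case empty
  hence "a = (\<lambda>_. 0)" by auto
  thus ?case by simp
next
  case (insert p S)
  define a' where "a' = (\<lambda>q. if q = p then 0 else a q)"
  have aPA: "a \<in> PA" using insert.prems by (auto simp: PA_iff)
  have a'PA: "a' \<in> PA" using aPA by (auto simp: PA_iff a'_def)
  have pp: "path p" using insert.prems by auto
  have eq: "a = padd a' (psmult (a p) (pbasis p))"
    by (auto simp: a'_def padd_def psmult_def pbasis_def)
  have "\<nu> a = \<nu> a' + sc (a p) (b p)"
    by (subst eq, subst pres_add) (auto simp: a'PA pp pres_smult)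
  moreover have "\<nu> a' = (\<Sum>q\<in>S. sc (a' q) (b q))"
    using insert by (intro insert.IH) (auto simp: a'_def)
  moreover have "(\<Sum>q\<in>S. sc (a' q) (b q)) = (\<Sum>q\<in>S. sc (a q) (b q))"
    using insert.hyps by (intro sum.cong) (auto simp: a'_def)
  ultimately show ?case using insert.hyps by (simp add: add.commute)
qed

lemma nu_expand: "a \<in> PA \<Longrightarrow> \<nu> a = (\<Sum>p\<in>PS. sc (a p) (b p))"
  by (rule nu_expand_gen) (auto simp: finite_PS PA_iff)

definition lin :: "('a \<Rightarrow> 'a) \<Rightarrow> bool" where
  "lin \<phi> \<longleftrightarrow> (\<forall>x y. \<phi> (x + y) = \<phi> x + \<phi> y) \<and> (\<forall>c x. \<phi> (sc c x) = sc c (\<phi> x))"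

lemma lin_zero: "lin \<phi> \<Longrightarrow> \<phi> 0 = 0"
proof -
  assume l: "lin \<phi>"
  have "\<phi> (0 + 0) = \<phi> 0 + \<phi> 0" using l by (simp only: lin_def)
  thus ?thesis by simp
qed

lemma lin_add: "lin \<phi> \<Longrightarrow> \<phi> (x + y) = \<phi> x + \<phi> y" by (simp add: lin_def)
lemma lin_sc: "lin \<phi> \<Longrightarrow> \<phi> (sc c x) = sc c (\<phi> x)" by (simp add: lin_def)

lemma lin_sum: "lin \<phi> \<Longrightarrow> \<phi> (\<Sum>p\<in>S. g p) = (\<Sum>p\<in>S. \<phi> (g p))"
  by (induction S rule: infinite_finite_induct) (simp_all add: lin_zero lin_add)

lemma lin_eq:
  assumes "lin \<phi>" "lin \<psi>" "\<And>u. path u \<Longrightarrow> \<phi> (b u) = \<psi> (b u)"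
  shows "\<phi> = \<psi>"
proof
  fix a
  obtain x where x: "x \<in> PA" "\<nu> x = a" using pres_surj by blast
  have ax: "a = (\<Sum>p\<in>PS. sc (x p) (b p))" using nu_expand[OF x(1)] x(2) by simp
  have "\<phi> a = (\<Sum>p\<in>PS. sc (x p) (\<phi> (b p)))"
    using assms(1) by (subst ax) (simp add: lin_sum lin_sc)
  also have "\<dots> = (\<Sum>p\<in>PS. sc (x p) (\<psi> (b p)))" using assms(3) by simp
  also have "\<dots> = \<psi> a"
    using assms(2) by (subst ax) (simp add: lin_sum lin_sc)
  finally show "\<phi> a = \<psi> a" .
qed

lemma I_iff: "x \<in> I \<longleftrightarrow> x \<in> PA \<and> \<nu> x = 0" by (simp add: pkernel_def)

lemma I_add: "x \<in> I \<Longrightarrow> y \<in> I \<Longrightarrow> padd x y \<in> I"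
  by (simp add: I_iff pres_add)
lemma I_smult: "x \<in> I \<Longrightarrow> psmult c x \<in> I"
  by (simp add: I_iff pres_smult)
lemma I_zero: "(\<lambda>_. 0) \<in> I" by (simp add: I_iff)
lemma I_multl: "x \<in> I \<Longrightarrow> a \<in> PA \<Longrightarrow> pmult Q0 Q1 s t a x \<in> I"
  by (simp add: I_iff pres_mult)
lemma I_multr: "x \<in> I \<Longrightarrow> a \<in> PA \<Longrightarrow> pmult Q0 Q1 s t x a \<in> I"
  by (simp add: I_iff pres_mult)

lemma nu_eq_diff: assumes "x \<in> PA" "y \<in> PA" "\<nu> x = \<nu> y" shows "(\<lambda>p. x p - y p) \<in> I"
proof -
  have d: "(\<lambda>p. x p - y p) \<in> PA" using assms unfolding PA_iff by (metis diff_zero)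
  have "x = padd (\<lambda>p. x p - y p) y" by (simp add: padd_def)
  hence "\<nu> x = \<nu> (\<lambda>p. x p - y p) + \<nu> y" using assms d by (metis pres_add)
  thus ?thesis using assms d by (simp add: I_iff)
qed


lemma path_concat: "path p \<Longrightarrow> path q \<Longrightarrow> fst q = ptgt t p \<Longrightarrow> path (fst p, snd p @ snd q)"
  by (cases p, cases q) (simp add: path_append)

lemma pm_basis:
  assumes pp: "path p" and pq: "path q"
  shows "pmult Q0 Q1 s t (pbasis q :: ('v,'e,'k) pelem) (pbasis p) =
    (if fst q = ptgt t p then pbasis (fst p, snd p @ snd q) else (\<lambda>_. 0))"
proof (rule ext)
  fix r :: "'v \<times> 'e list"
  obtain z as where r: "r = (z, as)" by (cases r)
  obtain x ps where p: "p = (x, ps)" by (cases p)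
  obtain y qs where q: "q = (y, qs)" by (cases q)
  define m where "m = length ps"
  define C where "C = (z = x \<and> take m as = ps \<and> y = ptgt t (x, ps) \<and> drop m as = qs)"
  have trm: "(pbasis q (ptgt t (z, take i as), drop i as) * pbasis p (z, take i as) :: 'k) =
      (if i = m then (if C then 1 else 0) else 0)" if "i \<le> length as" for i
  proof (cases "i = m")
    case True thus ?thesis by (auto simp: pbasis_def p q C_def)
  next
    case False
    have "(z, take i as) \<noteq> (x, ps)" using False that by (auto simp: m_def)
    thus ?thesis using False by (simp add: pbasis_def p)
  qed
  have sum: "(\<Sum>i\<le>length as. pbasis q (ptgt t (z, take i as), drop i as) * pbasis p (z, take i as) :: 'k)
      = (if m \<le> length as \<and> C then 1 else 0)"
    by (subst sum.cong[OF refl trm]) (auto simp: sum.delta)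
  have cond: "(m \<le> length as \<and> C) \<longleftrightarrow> (y = ptgt t (x, ps) \<and> z = x \<and> as = ps @ qs)"
    unfolding C_def m_def by (metis append_eq_conv_conj append_take_drop_id length_append le_add1)
  show "pmult Q0 Q1 s t (pbasis q :: ('v,'e,'k) pelem) (pbasis p) r =
    (if fst q = ptgt t p then pbasis (fst p, snd p @ snd q) else (\<lambda>_. 0)) r"
  proof (cases "path (z, as)")
    case True
    have "pmult Q0 Q1 s t (pbasis q :: ('v,'e,'k) pelem) (pbasis p) r =
      (\<Sum>i\<le>length as. pbasis q (ptgt t (z, take i as), drop i as) * pbasis p (z, take i as))"
      unfolding pmult_def r using True by (simp del: ptgt.simps)
    also have "\<dots> = (if m \<le> length as \<and> C then 1 else 0)" by (rule sum)
    also have "\<dots> = (if y = ptgt t (x, ps) \<and> z = x \<and> as = ps @ qs then 1 else 0)" unfolding cond ..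
    also have "\<dots> = (if fst q = ptgt t p then pbasis (fst p, snd p @ snd q) else (\<lambda>_. 0)) r"
      by (auto simp: p q r pbasis_def)
    finally show ?thesis .
  next
    case False
    have "\<not> (y = ptgt t (x, ps) \<and> z = x \<and> as = ps @ qs)"
      using False path_concat[OF pp pq] p q by auto
    thus ?thesis unfolding pmult_def r using False by (auto simp: p q pbasis_def)
  qed
qed

lemma bmult: "path p \<Longrightarrow> path q \<Longrightarrow> fst q = ptgt t p \<Longrightarrow> b q * b p = b (fst p, snd p @ snd q)"
  using pm_basis pres_mult by (metis pbasis_PA)

lemma bmult0: "path p \<Longrightarrow> path q \<Longrightarrow> fst q \<noteq> ptgt t p \<Longrightarrow> b q * b p = 0"
  using pm_basis pres_mult by (metis pbasis_PA nu_zero)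

lemma triv_path: "x \<in> Q0 \<Longrightarrow> path (x, [])" by (simp add: is_path_def)

lemma e_left: "y \<in> Q0 \<Longrightarrow> path u \<Longrightarrow> e y * b u = (if y = ptgt t u then b u else 0)"
  unfolding idem_def using bmult[of u "(y, [])"] bmult0[of u "(y, [])"] triv_path by auto

lemma e_right: "x \<in> Q0 \<Longrightarrow> path u \<Longrightarrow> b u * e x = (if x = fst u then b u else 0)"
  unfolding idem_def using bmult[of "(x, [])" u] bmult0[of "(x, [])" u] triv_path by auto

lemma e_e: "x \<in> Q0 \<Longrightarrow> y \<in> Q0 \<Longrightarrow> e y * e x = (if y = x then e x else 0)"
proof -
  assume x: "x \<in> Q0" and y: "y \<in> Q0"
  have "e y * b (x, []) = (if y = ptgt t (x, []) then b (x, []) else 0)"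
    using e_left[OF y triv_path[OF x]] .
  thus ?thesis by (simp add: idem_def)
qed

lemma pm_right_e:
  assumes "a \<in> PA"
  shows "pmult Q0 Q1 s t a (pbasis (x, [])) = (\<lambda>r. if fst r = x then a r else 0)"
proof (rule ext)
  fix r :: "'v \<times> 'e list"
  obtain z as where r: "r = (z, as)" by (cases r)
  have trm: "a (ptgt t (z, take i as), drop i as) * pbasis (x, []) (z, take i as) =
     (if i = 0 then (if z = x then a (z, as) else 0) else 0)" if "i \<le> length as" for i
    using that by (auto simp: pbasis_def)
  have "(\<Sum>i\<le>length as. a (ptgt t (z, take i as), drop i as) * pbasis (x, []) (z, take i as))
      = (if z = x then a (z, as) else 0)"
    by (subst sum.cong[OF refl trm]) (auto simp: sum.delta)
  moreover have "\<not> path (z, as) \<Longrightarrow> a (z, as) = 0" using assms by (auto simp only: PA_iff)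
  ultimately show "pmult Q0 Q1 s t a (pbasis (x, [])) r = (if fst r = x then a r else 0)"
    unfolding pmult_def r by auto
qed

lemma pm_left_e:
  assumes "a \<in> PA"
  shows "pmult Q0 Q1 s t (pbasis (y, [])) a = (\<lambda>r. if ptgt t r = y then a r else 0)"
proof (rule ext)
  fix r :: "'v \<times> 'e list"
  obtain z as where r: "r = (z, as)" by (cases r)
  have trm: "pbasis (y, []) (ptgt t (z, take i as), drop i as) * a (z, take i as) =
     (if i = length as then (if ptgt t (z, as) = y then a (z, as) else 0) else 0)" if "i \<le> length as" for i
    using that by (auto simp: pbasis_def)
  have "(\<Sum>i\<le>length as. pbasis (y, []) (ptgt t (z, take i as), drop i as) * a (z, take i as))
      = (if ptgt t (z, as) = y then a (z, as) else 0)"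
    by (subst sum.cong[OF refl trm]) (auto simp: sum.delta)
  moreover have "\<not> path (z, as) \<Longrightarrow> a (z, as) = 0" using assms by (auto simp only: PA_iff)
  ultimately show "pmult Q0 Q1 s t (pbasis (y, [])) a r = (if ptgt t r = y then a r else 0)"
    unfolding pmult_def r by auto
qed

lemma restr_I:
  assumes "\<rho> \<in> I" "x \<in> Q0" "y \<in> Q0"
  shows "(\<lambda>r. if fst r = x \<and> ptgt t r = y then \<rho> r else 0) \<in> I"
proof -
  have rPA: "\<rho> \<in> PA" using assms by (simp add: I_iff)
  have "pmult Q0 Q1 s t \<rho> (pbasis (x, [])) \<in> I"
    by (rule I_multr[OF assms(1)]) (simp add: triv_path assms)
  hence "pmult Q0 Q1 s t (pbasis (y, [])) (pmult Q0 Q1 s t \<rho> (pbasis (x, []))) \<in> I"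
    by (rule I_multl) (simp add: triv_path assms)
  moreover have "pmult Q0 Q1 s t (pbasis (y, [])) (pmult Q0 Q1 s t \<rho> (pbasis (x, []))) =
      (\<lambda>r. if fst r = x \<and> ptgt t r = y then \<rho> r else 0)"
  proof -
    have r2: "(\<lambda>r. if fst r = x then \<rho> r else 0) \<in> PA" using rPA by (rule restr_PA)
    show ?thesis by (simp add: pm_right_e[OF rPA] pm_left_e[OF r2]) (auto intro!: ext)
  qed
  ultimately show ?thesis by simp
qed

lemma minrel_parallel:
  assumes m: "minimal_relation Q0 Q1 s t I \<rho>" and u: "\<rho> u \<noteq> 0" and v: "\<rho> v \<noteq> 0"
  shows "fst v = fst u \<and> ptgt t v = ptgt t u"
proof (rule ccontr)
  assume nv: "\<not> ?thesis"
  have rI: "\<rho> \<in> I" using m by (simp add: minimal_relation_def)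
  have "path u" using rI u unfolding I_iff PA_iff by blast
  hence xy: "fst u \<in> Q0" "ptgt t u \<in> Q0" using path_ptgt by (simp add: is_path_def, blast)
  define S where "S = {r. \<rho> r \<noteq> 0 \<and> fst r = fst u \<and> ptgt t r = ptgt t u}"
  have "S \<noteq> {}" using u unfolding S_def by blast
  moreover have "S \<subset> {p. \<rho> p \<noteq> 0}" using v nv unfolding S_def by blast
  ultimately have "(\<lambda>p. if p \<in> S then \<rho> p else 0) \<notin> I"
    using m by (simp add: minimal_relation_def)
  moreover have "(\<lambda>p. if p \<in> S then \<rho> p else 0) = (\<lambda>r. if fst r = fst u \<and> ptgt t r = ptgt t u then \<rho> r else 0)"
    by (rule ext) (simp add: S_def)
  ultimately show False using restr_I[OF rI xy] by simp
qed


abbreviation "hmt \<equiv> homot Q0 Q1 s t I"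

lemma walk_Cons: "walk (x, st # sts) \<longleftrightarrow> x \<in> Q0 \<and> fst st \<in> Q1 \<and> step_src s t st = x \<and> walk (step_tgt s t st, sts)"
proof -
  obtain a bb where st: "st = (a, bb)" by (cases st)
  show ?thesis using st_Q0[of a] by (auto simp: is_walk_def st)
qed

lemma walk_Nil: "walk (x, []) \<longleftrightarrow> x \<in> Q0" by (simp add: is_walk_def)

lemma walk_fst: "walk w \<Longrightarrow> fst w \<in> Q0" by (simp add: is_walk_def)

lemma walk_append: "walk (x, as @ bs) \<longleftrightarrow> walk (x, as) \<and> walk (wtgt s t (x, as), bs)"
proof (induction as arbitrary: x)
  case Nil thus ?case by (auto simp: walk_Nil is_walk_def)
next
  case (Cons a as)
  show ?case using Cons.IH[of "step_tgt s t a"] by (simp add: walk_Cons)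
qed

lemma walk_wtgt: "walk w \<Longrightarrow> wtgt s t w \<in> Q0"
proof -
  assume w: "walk w"
  obtain x sts where ws: "w = (x, sts)" by (cases w)
  have "walk (x, sts @ [])" using w ws by simp
  hence "walk (wtgt s t (x, sts), [])" using walk_append by blast
  thus ?thesis using ws by (simp add: walk_Nil)
qed

lemma wtgt_concat: "fst w2 = wtgt s t w1 \<Longrightarrow> wtgt s t (wconcat w1 w2) = wtgt s t w2"
  by (cases w1, cases w2) (simp add: wconcat_def wtgt_append)

lemma fst_concat[simp]: "fst (wconcat w1 w2) = fst w1" by (simp add: wconcat_def)

lemma walk_concat: "walk w1 \<Longrightarrow> walk w2 \<Longrightarrow> fst w2 = wtgt s t w1 \<Longrightarrow> walk (wconcat w1 w2)"
  by (cases w1, cases w2) (simp add: wconcat_def walk_append)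

lemma concat_assoc: "wconcat (wconcat a b') c = wconcat a (wconcat b' c)"
  by (simp add: wconcat_def)

lemma concat_Nil_left: "fst w = x \<Longrightarrow> wconcat (x, []) w = w"
  by (cases w) (simp add: wconcat_def)

lemma concat_Nil_right: "wconcat w (y, []) = w"
  by (cases w) (simp add: wconcat_def)

lemma winv_Nil[simp]: "winv s t (x, []) = (x, [])" by (simp add: winv_def)

lemma walk_winv: "walk w \<Longrightarrow> walk (winv s t w) \<and> fst (winv s t w) = wtgt s t w \<and> wtgt s t (winv s t w) = fst w"
proof (induction "snd w" arbitrary: w)
  case Nil thus ?case by (cases w) (simp add: winv_def)
next
  case (Cons st sts)
  obtain x where w: "w = (x, st # sts)" using Cons.hyps(2) by (metis prod.collapse)
  obtain a bb where st: "st = (a, bb)" by (cases st)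
  have w': "walk (step_tgt s t st, sts)" and x: "x \<in> Q0" "fst st \<in> Q1" "step_src s t st = x"
    using Cons.prems w walk_Cons by auto
  note IH = Cons.hyps(1)[of "(step_tgt s t st, sts)", simplified, OF w']
  have inv: "winv s t w = wconcat (winv s t (step_tgt s t st, sts)) (step_tgt s t st, [(a, \<not> bb)])"
    by (simp add: winv_def wconcat_def w st wtgt_append[of _ _ _ "[st]", simplified])
  have wt: "wtgt s t w = wtgt s t (step_tgt s t st, sts)"
    using wtgt_append[of s t x "[st]" sts] w by simp
  have w2: "walk (step_tgt s t st, [(a, \<not> bb)])" using x st st_Q0[of a] by (auto simp: is_walk_def)
  show ?case
  proof (intro conjI)
    show "walk (winv s t w)" unfolding inv
      by (rule walk_concat) (use IH w2 x st in auto)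
    show "fst (winv s t w) = wtgt s t w" unfolding inv wt using IH by simp
    show "wtgt s t (winv s t w) = fst w" unfolding inv using IH x st w
      by (subst wtgt_concat) auto
  qed
qed

lemma winv_winv: "walk w \<Longrightarrow> winv s t (winv s t w) = w"
  using walk_winv[of w] by (cases w) (simp add: winv_def rev_map comp_def case_prod_beta)

lemma path_walk_walk: "path p \<Longrightarrow> walk (path_walk p) \<and> fst (path_walk p) = fst p \<and> wtgt s t (path_walk p) = ptgt t p"
proof -
  assume p: "path p"
  obtain x as where xa: "p = (x, as)" by (cases p)
  have "wchain s t x (map (\<lambda>a. (a, True)) as)" if "chain s t x as" for x
    using that by (induction as arbitrary: x) auto
  moreover have "wtgt s t (x, map (\<lambda>a. (a, True)) as) = ptgt t (x, as)"
    by (cases as rule: rev_cases) auto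
  ultimately show ?thesis using p xa by (auto simp: path_walk_def is_path_def is_walk_def)
qed

lemma path_walk_concat: "path_walk (fst p, snd p @ snd q) = wconcat (path_walk p) (path_walk q)"
  by (simp add: path_walk_def wconcat_def)

lemma hm_props: "hmt w w' \<Longrightarrow> walk w \<and> walk w' \<and> fst w = fst w' \<and> wtgt s t w = wtgt s t w'"
proof (induction rule: homot.induct)
  case (h_refl w) thus ?case by simp
next
  case (h_sym w w') thus ?case by simp
next
  case (h_trans w w' w'') thus ?case by simp
next
  case (h_inv1 \<alpha>) thus ?case using st_Q0[of \<alpha>] by (auto simp: is_walk_def)
next
  case (h_inv2 \<alpha>) thus ?case using st_Q0[of \<alpha>] by (auto simp: is_walk_def)
next
  case (h_concat w w' a b')
  have aw: "walk (wconcat a w)" "walk (wconcat a w')"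
    using h_concat walk_concat by auto
  have t1a: "wtgt s t (wconcat a w) = wtgt s t w" by (rule wtgt_concat) (use h_concat in auto)
  have t1b: "wtgt s t (wconcat a w') = wtgt s t w'" by (rule wtgt_concat) (use h_concat in auto)
  note t1 = t1a t1b
  show ?case
  proof (intro conjI)
    show "walk (wconcat (wconcat a w) b')" using aw h_concat t1 by (intro walk_concat) auto
    show "walk (wconcat (wconcat a w') b')" using aw h_concat t1 by (intro walk_concat) auto
    show "fst (wconcat (wconcat a w) b') = fst (wconcat (wconcat a w') b')" by simp
    show "wtgt s t (wconcat (wconcat a w) b') = wtgt s t (wconcat (wconcat a w') b')"
      using h_concat t1 by (simp add: wtgt_concat)
  qed
next
  case (h_rel \<rho> u v)
  have rI: "\<rho> \<in> I" using h_rel by (simp add: minimal_relation_def)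
  have pu: "path u" "path v" using rI h_rel unfolding I_iff PA_iff by blast+
  have "fst v = fst u \<and> ptgt t v = ptgt t u" using minrel_parallel h_rel by blast
  thus ?case using path_walk_walk[OF pu(1)] path_walk_walk[OF pu(2)] by simp
qed

lemma hm_refl: "walk w \<Longrightarrow> hmt w w" by (rule h_refl)
lemma hm_sym: "hmt w w' \<Longrightarrow> hmt w' w" by (rule h_sym)
lemma hm_trans: "hmt w w' \<Longrightarrow> hmt w' w'' \<Longrightarrow> hmt w w''" by (rule h_trans)

lemma hm_cong:
  assumes h1: "hmt a a'" and h2: "hmt b1 b1'" and j: "wtgt s t a = fst b1"
  shows "hmt (wconcat a b1) (wconcat a' b1')"
proof -
  note p1 = hm_props[OF h1] and p2 = hm_props[OF h2]
  have "hmt (wconcat (wconcat (fst a, []) a) b1) (wconcat (wconcat (fst a, []) a') b1)"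
    using p1 p2 j by (intro h_concat h1) (auto simp: walk_Nil walk_fst)
  hence s1: "hmt (wconcat a b1) (wconcat a' b1)" using p1 by (simp add: concat_Nil_left)
  have "wtgt s t (wconcat a' b1) = wtgt s t b1" using p1 j by (simp add: wtgt_concat)
  hence "hmt (wconcat (wconcat a' b1) (wtgt s t b1, [])) (wconcat (wconcat a' b1') (wtgt s t b1, []))"
    using p1 p2 j by (intro h_concat h2) (auto simp: walk_Nil walk_wtgt)
  hence "hmt (wconcat a' b1) (wconcat a' b1')" by (simp add: concat_Nil_right)
  with s1 show ?thesis by (rule hm_trans)
qed

lemma hm_cancel: "walk w \<Longrightarrow> hmt (wconcat w (winv s t w)) (fst w, [])"
proof (induction "snd w" arbitrary: w)
  case Nil thus ?case by (cases w) (simp add: wconcat_def hm_refl walk_Nil walk_fst)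
next
  case (Cons st sts)
  obtain x where w: "w = (x, st # sts)" using Cons.hyps(2) by (metis prod.collapse)
  obtain a bb where st: "st = (a, bb)" by (cases st)
  define y where "y = step_tgt s t st"
  have w': "walk (y, sts)" and x: "x \<in> Q0" "a \<in> Q1" "step_src s t st = x"
    using Cons.prems w walk_Cons st y_def by auto
  note IH = Cons.hyps(1)[of "(y, sts)", simplified, OF w']
  note iw = walk_winv[OF w']
  have y0: "y \<in> Q0" using w' walk_fst by force
  have wa: "walk (x, [st])" using x st y0 by (auto simp: is_walk_def y_def)
  have wb: "walk (y, [(a, \<not> bb)])" using x st y0 by (auto simp: is_walk_def y_def)
  have "hmt (wconcat (wconcat (x, [st]) (wconcat (y, sts) (winv s t (y, sts)))) (y, [(a, \<not> bb)]))
            (wconcat (wconcat (x, [st]) (y, [])) (y, [(a, \<not> bb)]))"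
    using wa wb iw w' by (intro h_concat IH) (auto simp: y_def wtgt_concat)
  moreover have "wconcat (wconcat (x, [st]) (wconcat (y, sts) (winv s t (y, sts)))) (y, [(a, \<not> bb)])
      = wconcat w (winv s t w)"
    by (simp add: w winv_def wconcat_def st)
  moreover have "hmt (x, [(a, bb), (a, \<not> bb)]) (x, [])"
  proof (cases bb)
    case True
    have "hmt (s a, [(a, True), (a, False)]) (s a, [])" by (rule h_inv2) (rule x(2))
    thus ?thesis using x st True by simp
  next
    case False
    have "hmt (t a, [(a, False), (a, True)]) (t a, [])" by (rule h_inv1) (rule x(2))
    thus ?thesis using x st False by simp
  qed
  ultimately show ?case using w st by (simp add: wconcat_def) (metis hm_trans)
qed

lemma hm_cancel2: "walk w \<Longrightarrow> hmt (wconcat (winv s t w) w) (wtgt s t w, [])"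
  using hm_cancel[of "winv s t w"] walk_winv[of w] winv_winv[of w] by simp


lemma hclass_eq: "hmt w w' \<Longrightarrow> hclass Q0 Q1 s t I w = hclass Q0 Q1 s t I w'"
  unfolding hclass_def by (blast intro: hm_trans hm_sym)

lemma hclass_mem: "walk w \<Longrightarrow> w \<in> hclass Q0 Q1 s t I w"
  unfolding hclass_def by (simp add: hm_refl)

lemma hclass_mem_iff: "w' \<in> hclass Q0 Q1 s t I w \<longleftrightarrow> hmt w' w"
  unfolding hclass_def by simp

end

locale qsg = qs Q0 Q1 s t sc \<nu>
  for Q0 :: "'v set" and Q1 :: "'e set" and s t :: "'e \<Rightarrow> 'v"
    and sc :: "'k::field \<Rightarrow> 'a::ring_1 \<Rightarrow> 'a" and \<nu> :: "('v,'e,'k) pelem \<Rightarrow> 'a" +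
  fixes x0 :: 'v and \<gamma> :: "'v \<Rightarrow> ('v,'e) walk"
  assumes x0: "x0 \<in> Q0"
    and gam: "\<And>x. x \<in> Q0 \<Longrightarrow> walk (\<gamma> x) \<and> fst (\<gamma> x) = x0 \<and> wtgt s t (\<gamma> x) = x"
    and gam0: "\<gamma> x0 = (x0, [])"
begin

abbreviation "G \<equiv> pi1 Q0 Q1 s t I x0"
abbreviation "hc \<equiv> hclass Q0 Q1 s t I"

definition loop :: "('v,'e) walk \<Rightarrow> ('v,'e) walk" where
  "loop w = wconcat (wconcat (\<gamma> (fst w)) w) (winv s t (\<gamma> (wtgt s t w)))"

definition Fw :: "(('v,'e) walk set \<Rightarrow> 'k) \<Rightarrow> ('v,'e) walk \<Rightarrow> 'k" where
  "Fw f w = f (hc (loop w))"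

lemma loop_walk: assumes w: "walk w" shows "walk (loop w) \<and> fst (loop w) = x0 \<and> wtgt s t (loop w) = x0"
proof -
  have a: "fst w \<in> Q0" "wtgt s t w \<in> Q0" using w walk_fst walk_wtgt by auto
  note g1 = gam[OF a(1)] and g2 = gam[OF a(2)]
  note i2 = walk_winv[of "\<gamma> (wtgt s t w)"]
  have c1: "walk (wconcat (\<gamma> (fst w)) w)" using g1 w by (intro walk_concat) auto
  have t1: "wtgt s t (wconcat (\<gamma> (fst w)) w) = wtgt s t w" using g1 by (intro wtgt_concat) auto
  have "walk (loop w)" unfolding loop_def by (rule walk_concat) (use c1 t1 g2 i2 in auto)
  moreover have "wtgt s t (loop w) = x0" unfolding loop_def using t1 g2 i2 by (subst wtgt_concat) auto
  ultimately show ?thesis using g1 by (simp add: loop_def)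
qed

lemma carrier_G: "X \<in> carrier G \<longleftrightarrow> (\<exists>w. X = hc w \<and> walk w \<and> fst w = x0 \<and> wtgt s t w = x0)"
  unfolding pi1_def by simp

lemma loop_carrier: "walk w \<Longrightarrow> hc (loop w) \<in> carrier G"
  unfolding carrier_G using loop_walk by blast

lemma mult_G:
  assumes A: "walk A" and B: "walk B" and j: "wtgt s t A = fst B"
  shows "hc A \<otimes>\<^bsub>G\<^esub> hc B = hc (wconcat A B)"
proof -
  have "{w. \<exists>a\<in>hc A. \<exists>b\<in>hc B. hmt w (wconcat a b)} = hc (wconcat A B)"
  proof (rule equalityI; rule subsetI)
    fix w assume "w \<in> {w. \<exists>a\<in>hc A. \<exists>b\<in>hc B. hmt w (wconcat a b)}"
    then obtain a b' where ab: "hmt a A" "hmt b' B" "hmt w (wconcat a b')"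
      by (auto simp: hclass_mem_iff)
    have "wtgt s t a = fst b'" using hm_props[OF ab(1)] hm_props[OF ab(2)] j by simp
    hence "hmt (wconcat a b') (wconcat A B)" using ab by (intro hm_cong) auto
    thus "w \<in> hc (wconcat A B)" using ab(3) by (auto simp: hclass_mem_iff intro: hm_trans)
  next
    fix w assume "w \<in> hc (wconcat A B)"
    hence "hmt w (wconcat A B)" by (simp add: hclass_mem_iff)
    thus "w \<in> {w. \<exists>a\<in>hc A. \<exists>b\<in>hc B. hmt w (wconcat a b)}"
      using hclass_mem[OF A] hclass_mem[OF B] by blast
  qed
  thus ?thesis by (simp add: pi1_def)
qed

lemma hom_add: "f \<in> hom G kplus \<Longrightarrow> X \<in> carrier G \<Longrightarrow> Y \<in> carrier G \<Longrightarrow> f (X \<otimes>\<^bsub>G\<^esub> Y) = f X + f Y"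
  by (simp add: hom_def kplus_def)

lemma Fw_homot: "hmt w w' \<Longrightarrow> Fw f w = Fw f w'"
proof -
  assume h: "hmt w w'"
  note p = hm_props[OF h]
  have a: "fst w \<in> Q0" "wtgt s t w \<in> Q0" using p walk_fst walk_wtgt by auto
  note g1 = gam[OF a(1)] and g2 = gam[OF a(2)]
  have "hmt (wconcat (\<gamma> (fst w)) w) (wconcat (\<gamma> (fst w)) w')"
    by (rule hm_cong[OF hm_refl h]) (use g1 in auto)
  moreover have "hmt (winv s t (\<gamma> (wtgt s t w))) (winv s t (\<gamma> (wtgt s t w)))"
    using g2 walk_winv by (intro hm_refl) auto
  moreover have "wtgt s t (wconcat (\<gamma> (fst w)) w) = fst (winv s t (\<gamma> (wtgt s t w)))"
    using g1 g2 walk_winv[of "\<gamma> (wtgt s t w)"] by (subst wtgt_concat) auto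
  ultimately have "hmt (loop w) (wconcat (wconcat (\<gamma> (fst w)) w') (winv s t (\<gamma> (wtgt s t w))))"
    unfolding loop_def by (rule hm_cong)
  moreover have "loop w' = wconcat (wconcat (\<gamma> (fst w)) w') (winv s t (\<gamma> (wtgt s t w)))"
    using p by (simp add: loop_def)
  ultimately have "hmt (loop w) (loop w')" by simp
  thus ?thesis unfolding Fw_def by (simp add: hclass_eq)
qed

lemma Fw_concat:
  assumes f: "f \<in> hom G kplus" and w1: "walk w1" and w2: "walk w2" and j: "wtgt s t w1 = fst w2"
  shows "Fw f (wconcat w1 w2) = Fw f w1 + Fw f w2"
proof -
  define x where "x = fst w1"
  define m where "m = wtgt s t w1"
  define y where "y = wtgt s t w2"
  have xmy: "x \<in> Q0" "m \<in> Q0" "y \<in> Q0" using w1 w2 walk_fst walk_wtgt x_def m_def y_def by auto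
  note gx = gam[OF xmy(1)] and gm = gam[OF xmy(2)] and gy = gam[OF xmy(3)]
  define P where "P = wconcat (\<gamma> x) w1"
  define Q where "Q = wconcat w2 (winv s t (\<gamma> y))"
  have iy: "walk (winv s t (\<gamma> y))" "fst (winv s t (\<gamma> y)) = y" using walk_winv gy by auto
  have im: "walk (winv s t (\<gamma> m))" "fst (winv s t (\<gamma> m)) = m" "wtgt s t (winv s t (\<gamma> m)) = x0"
    using walk_winv gm by auto
  have P: "walk P" "wtgt s t P = m" unfolding P_def using gx w1 x_def m_def
    by (auto intro!: walk_concat wtgt_concat)
  have Q: "walk Q" "fst Q = m" unfolding Q_def using iy w2 j m_def y_def by (auto intro!: walk_concat)
  have c: "hmt (wconcat (winv s t (\<gamma> m)) (\<gamma> m)) (m, [])"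
    using hm_cancel2[of "\<gamma> m"] gm by simp
  have "hmt (wconcat (wconcat (winv s t (\<gamma> m)) (\<gamma> m)) Q) (wconcat (m, []) Q)"
    by (rule hm_cong[OF c hm_refl[OF Q(1)]]) (use gm walk_winv[of "\<gamma> m"] Q in \<open>auto simp: wtgt_concat\<close>)
  hence hq: "hmt (wconcat (wconcat (winv s t (\<gamma> m)) (\<gamma> m)) Q) Q" using Q by (simp add: concat_Nil_left)
  have h: "hmt (wconcat P (wconcat (wconcat (winv s t (\<gamma> m)) (\<gamma> m)) Q)) (wconcat P Q)"
    by (rule hm_cong[OF hm_refl[OF P(1)] hq]) (use P im in auto)
  have e1: "wconcat P (wconcat (wconcat (winv s t (\<gamma> m)) (\<gamma> m)) Q) = wconcat (loop w1) (loop w2)"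
    unfolding loop_def P_def Q_def x_def m_def y_def using j by (simp add: wconcat_def)
  have e2: "wconcat P Q = loop (wconcat w1 w2)"
    unfolding loop_def P_def Q_def x_def m_def y_def using j wtgt_concat[OF j[symmetric]] by (simp add: wconcat_def)
  have "Fw f (wconcat w1 w2) = f (hc (wconcat (loop w1) (loop w2)))"
    unfolding Fw_def using h e1 e2 by (metis hclass_eq)
  also have "\<dots> = f (hc (loop w1) \<otimes>\<^bsub>G\<^esub> hc (loop w2))"
    using loop_walk[OF w1] loop_walk[OF w2] by (simp add: mult_G)
  also have "\<dots> = Fw f w1 + Fw f w2"
    unfolding Fw_def using hom_add[OF f] loop_carrier w1 w2 by simp
  finally show ?thesis .
qed

lemma Fw_triv: assumes f: "f \<in> hom G kplus" and x: "x \<in> Q0" shows "Fw f (x, []) = 0"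
proof -
  have "Fw f (wconcat (x, []) (x, [])) = Fw f (x, []) + Fw f (x, [])"
    using x by (intro Fw_concat f) (auto simp: walk_Nil)
  hence "Fw f (x, []) + 0 = Fw f (x, []) + Fw f (x, [])" by (simp add: wconcat_def)
  thus ?thesis using add_left_imp_eq by metis
qed

lemma Fw_closed: "walk w \<Longrightarrow> fst w = x0 \<Longrightarrow> wtgt s t w = x0 \<Longrightarrow> Fw f w = f (hc w)"
  unfolding Fw_def loop_def by (cases w) (simp add: gam0 wconcat_def)


end

context qs
begin

abbreviation "Der \<equiv> Der0 Q0 sc \<nu>"
abbreviation "Inn \<equiv> Int0 Q0 sc \<nu>"

lemma der_lin: "D \<in> Der \<Longrightarrow> lin D" by (simp add: Der0_def lin_def)
lemma der_mult: "D \<in> Der \<Longrightarrow> D (x * y) = D x * y + x * D y" by (simp add: Der0_def)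
lemma der_e: "D \<in> Der \<Longrightarrow> x \<in> Q0 \<Longrightarrow> D (e x) = 0" by (simp add: Der0_def)

lemma DerI:
  assumes "lin D" "\<And>x y. D (x * y) = D x * y + x * D y" "\<And>x. x \<in> Q0 \<Longrightarrow> D (e x) = 0"
  shows "D \<in> Der"
  using assms by (simp add: Der0_def lin_def)

lemma Inn_iff: "\<phi> \<in> Inn \<longleftrightarrow> (\<exists>c. \<phi> = (\<lambda>a. (\<Sum>x\<in>Q0. sc (c x) (e x)) * a - a * (\<Sum>x\<in>Q0. sc (c x) (e x))))"
  by (auto simp: Int0_def Eset_def)

lemma Inn_zero: "(\<lambda>a. 0) \<in> Inn"
  unfolding Inn_iff by (rule exI[of _ "\<lambda>_. 0"]) simp

lemma Inn_add: "\<phi> \<in> Inn \<Longrightarrow> \<psi> \<in> Inn \<Longrightarrow> (\<lambda>a. \<phi> a + \<psi> a) \<in> Inn"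
proof -
  assume "\<phi> \<in> Inn" "\<psi> \<in> Inn"
  then obtain c d where c: "\<phi> = (\<lambda>a. (\<Sum>x\<in>Q0. sc (c x) (e x)) * a - a * (\<Sum>x\<in>Q0. sc (c x) (e x)))"
    and d: "\<psi> = (\<lambda>a. (\<Sum>x\<in>Q0. sc (d x) (e x)) * a - a * (\<Sum>x\<in>Q0. sc (d x) (e x)))"
    unfolding Inn_iff by blast
  have "(\<Sum>x\<in>Q0. sc (c x + d x) (e x)) = (\<Sum>x\<in>Q0. sc (c x) (e x)) + (\<Sum>x\<in>Q0. sc (d x) (e x))"
    by (simp add: vs.scale_left_distrib sum.distrib)
  hence "(\<lambda>a. \<phi> a + \<psi> a) = (\<lambda>a. (\<Sum>x\<in>Q0. sc (c x + d x) (e x)) * a - a * (\<Sum>x\<in>Q0. sc (c x + d x) (e x)))"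
    unfolding c d by (simp add: algebra_simps)
  thus ?thesis unfolding Inn_iff by (rule exI[of _ "\<lambda>x. c x + d x"])
qed

lemma Inn_smult: "\<phi> \<in> Inn \<Longrightarrow> (\<lambda>a. sc k (\<phi> a)) \<in> Inn"
proof -
  assume "\<phi> \<in> Inn"
  then obtain c where c: "\<phi> = (\<lambda>a. (\<Sum>x\<in>Q0. sc (c x) (e x)) * a - a * (\<Sum>x\<in>Q0. sc (c x) (e x)))"
    unfolding Inn_iff by blast
  have "(\<Sum>x\<in>Q0. sc (k * c x) (e x)) = sc k (\<Sum>x\<in>Q0. sc (c x) (e x))"
    by (simp add: vs.scale_sum_right)
  hence "(\<lambda>a. sc k (\<phi> a)) = (\<lambda>a. (\<Sum>x\<in>Q0. sc (k * c x) (e x)) * a - a * (\<Sum>x\<in>Q0. sc (k * c x) (e x)))"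
  proof -
    have "\<And>E a. sc k (E * a - a * E) = sc k E * a - a * sc k E"
      by (metis vs.scale_right_diff_distrib sc_mult_left sc_mult_right)
    thus ?thesis unfolding c using \<open>(\<Sum>x\<in>Q0. sc (k * c x) (e x)) = _\<close> by simp
  qed
  thus ?thesis unfolding Inn_iff by (rule exI[of _ "\<lambda>x. k * c x"])
qed

lemma Inn_neg: "\<phi> \<in> Inn \<Longrightarrow> (\<lambda>a. - \<phi> a) \<in> Inn"
  using Inn_smult[of \<phi> "-1"] by simp

lemma Inn_diff: "\<phi> \<in> Inn \<Longrightarrow> \<psi> \<in> Inn \<Longrightarrow> (\<lambda>a. \<phi> a - \<psi> a) \<in> Inn"
  using Inn_add[of \<phi> "\<lambda>a. - \<psi> a"] Inn_neg[of \<psi>] by simp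

lemma inner_b:
  assumes u: "path u"
  shows "(\<Sum>x\<in>Q0. sc (c x) (e x)) * b u - b u * (\<Sum>x\<in>Q0. sc (c x) (e x))
         = sc (c (ptgt t u) - c (fst u)) (b u)"
proof -
  have y: "ptgt t u \<in> Q0" using path_ptgt u by blast
  have x: "fst u \<in> Q0" using u by (cases u) (simp add: is_path_def)
  have "(\<Sum>x\<in>Q0. sc (c x) (e x)) * b u = (\<Sum>x\<in>Q0. sc (c x) (e x * b u))"
    by (simp add: sum_distrib_right sc_mult_left)
  also have "\<dots> = (\<Sum>x\<in>Q0. if x = ptgt t u then sc (c x) (b u) else 0)"
    using u by (intro sum.cong) (auto simp: e_left)
  also have "\<dots> = sc (c (ptgt t u)) (b u)" using y fin_Q0 by (simp add: sum.delta')
  finally have 1: "(\<Sum>x\<in>Q0. sc (c x) (e x)) * b u = sc (c (ptgt t u)) (b u)" .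
  have "b u * (\<Sum>x\<in>Q0. sc (c x) (e x)) = (\<Sum>x\<in>Q0. sc (c x) (b u * e x))"
    by (simp add: sum_distrib_left sc_mult_right)
  also have "\<dots> = (\<Sum>x\<in>Q0. if x = fst u then sc (c x) (b u) else 0)"
    using u by (intro sum.cong) (auto simp: e_right)
  also have "\<dots> = sc (c (fst u)) (b u)" using x fin_Q0 by (simp add: sum.delta')
  finally have 2: "b u * (\<Sum>x\<in>Q0. sc (c x) (e x)) = sc (c (fst u)) (b u)" .
  show ?thesis unfolding 1 2 by (simp add: vs.scale_left_diff_distrib)
qed

lemma inner_lin: "lin (\<lambda>a. E * a - a * E)"
  unfolding lin_def
proof (intro conjI allI)
  fix x y show "E * (x + y) - (x + y) * E = (E * x - x * E) + (E * y - y * E)" by (simp add: algebra_simps)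
next
  fix c x show "E * sc c x - sc c x * E = sc c (E * x - x * E)"
    by (simp add: vs.scale_right_diff_distrib sc_mult_right[symmetric] sc_mult_left[symmetric])
qed

lemma Inn_lin: "\<phi> \<in> Inn \<Longrightarrow> lin \<phi>"
  unfolding Inn_iff using inner_lin by blast

lemma arrow_nonzero: assumes "path (x, [\<alpha>])" shows "b (x, [\<alpha>]) \<noteq> 0"
proof
  assume z: "b (x, [\<alpha>]) = 0"
  have "pbasis (x, [\<alpha>]) \<in> PA" using assms by (rule pbasis_PA)
  hence "pbasis (x, [\<alpha>]) \<in> I" using z unfolding I_iff by blast
  moreover have "I \<subseteq> arrow_ideal_pow Q0 Q1 s t 2"
    using adm unfolding admissible_def by blast
  ultimately have "pbasis (x, [\<alpha>]) \<in> (arrow_ideal_pow Q0 Q1 s t 2 :: ('v,'e,'k) pelem set)"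
    by blast
  hence h: "\<forall>p. (pbasis (x, [\<alpha>]) :: ('v,'e,'k) pelem) p \<noteq> 0 \<longrightarrow> 2 \<le> length (snd p)"
    unfolding arrow_ideal_pow_def mem_Collect_eq by (rule conjunct2)
  have "(pbasis (x, [\<alpha>]) :: ('v,'e,'k) pelem) (x, [\<alpha>]) \<noteq> 0" by (simp add: pbasis_def)
  from h[rule_format, OF this] show False by simp
qed


definition Lam :: "('v \<times> 'e list \<Rightarrow> 'k) \<Rightarrow> ('v,'e,'k) pelem \<Rightarrow> ('v,'e,'k) pelem" where
  "Lam F x = (\<lambda>p. F p * x p)"

lemma Lam_PA[simp]: "x \<in> PA \<Longrightarrow> Lam F x \<in> PA"
  unfolding Lam_def by (rule fmult_PA)

lemma Lam_padd: "Lam F (padd x y) = padd (Lam F x) (Lam F y)"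
  by (simp add: Lam_def padd_def algebra_simps)

lemma Lam_psmult: "Lam F (psmult c x) = psmult c (Lam F x)"
  by (simp add: Lam_def psmult_def algebra_simps)

lemma Lam_pbasis: "Lam F (pbasis u) = psmult (F u) (pbasis u)"
  by (rule ext) (simp add: Lam_def psmult_def pbasis_def)

lemma Lam_I:
  assumes Fmin: "\<And>\<rho> u v. minimal_relation Q0 Q1 s t I \<rho> \<Longrightarrow> \<rho> u \<noteq> 0 \<Longrightarrow> \<rho> v \<noteq> 0 \<Longrightarrow> F u = F v"
  shows "x \<in> I \<Longrightarrow> Lam F x \<in> I"
proof (induction "card {p. x p \<noteq> 0}" arbitrary: x rule: less_induct)
  case less
  have xPA: "x \<in> PA" using less.prems by (simp add: I_iff)
  have fin: "finite {p. x p \<noteq> 0}" using supp_PS[OF xPA] finite_PS by (rule finite_subset)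
  show ?case
  proof (cases "x = (\<lambda>_. 0)")
    case True thus ?thesis by (simp add: Lam_def I_zero)
  next
    case nz: False
    show ?thesis
    proof (cases "minimal_relation Q0 Q1 s t I x")
      case True
      obtain u where u: "x u \<noteq> 0" using nz by (meson ext)
      have "Lam F x = psmult (F u) x"
      proof (rule ext)
        fix p show "Lam F x p = psmult (F u) x p"
          using Fmin[OF True _ u, of p] by (cases "x p = 0") (auto simp: Lam_def psmult_def)
      qed
      thus ?thesis using less.prems by (simp add: I_smult)
    next
      case False
      then obtain S where S: "S \<noteq> {}" "S \<subset> {p. x p \<noteq> 0}" "(\<lambda>p. if p \<in> S then x p else 0) \<in> I"
        using less.prems nz unfolding minimal_relation_def by blast
      define x1 where "x1 = (\<lambda>p. if p \<in> S then x p else 0)"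
      define x2 where "x2 = (\<lambda>p. if p \<in> S then 0 else x p)"
      have x12: "x = padd x1 x2" by (rule ext) (simp add: x1_def x2_def padd_def)
      have x1I: "x1 \<in> I" using S(3) by (simp add: x1_def)
      have "x2 = (\<lambda>p. if p \<notin> S then x p else 0)" by (rule ext) (simp add: x2_def)
      hence x2PA: "x2 \<in> PA" using restr_PA[OF xPA, of "\<lambda>p. p \<notin> S"] by simp
      have "\<nu> x = \<nu> x1 + \<nu> x2" using x12 x1I x2PA by (simp add: I_iff pres_add)
      hence x2I: "x2 \<in> I" using less.prems x1I x2PA by (simp add: I_iff)
      have s1: "{p. x1 p \<noteq> 0} = S" using S(2) by (auto simp: x1_def)
      have s2: "{p. x2 p \<noteq> 0} = {p. x p \<noteq> 0} - S" by (auto simp: x2_def)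
      have c1: "card {p. x1 p \<noteq> 0} < card {p. x p \<noteq> 0}"
        unfolding s1 using S(2) fin by (rule psubset_card_mono[rotated])
      have c2: "card {p. x2 p \<noteq> 0} < card {p. x p \<noteq> 0}"
        unfolding s2 using S fin by (intro psubset_card_mono) auto
      have "Lam F x1 \<in> I" using less.hyps[OF c1 x1I] .
      moreover have "Lam F x2 \<in> I" using less.hyps[OF c2 x2I] .
      ultimately show ?thesis unfolding x12 Lam_padd by (rule I_add)
    qed
  qed
qed

lemma Lam_pmult:
  assumes Fadd: "\<And>p q. path p \<Longrightarrow> path q \<Longrightarrow> fst q = ptgt t p \<Longrightarrow> F (fst p, snd p @ snd q) = F p + F q"
  shows "Lam F (pmult Q0 Q1 s t x y) = padd (pmult Q0 Q1 s t (Lam F x) y) (pmult Q0 Q1 s t x (Lam F y))"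
proof (rule ext)
  fix r :: "'v \<times> 'e list"
  obtain z as where r: "r = (z, as)" by (cases r)
  show "Lam F (pmult Q0 Q1 s t x y) r = padd (pmult Q0 Q1 s t (Lam F x) y) (pmult Q0 Q1 s t x (Lam F y)) r"
  proof (cases "path (z, as)")
    case False thus ?thesis by (simp add: r Lam_def padd_def pmult_def)
  next
    case True
    have trm: "F (z, as) * (x (ptgt t (z, take i as), drop i as) * y (z, take i as)) =
        F (ptgt t (z, take i as), drop i as) * x (ptgt t (z, take i as), drop i as) * y (z, take i as) +
        x (ptgt t (z, take i as), drop i as) * (F (z, take i as) * y (z, take i as))" for i
    proof -
      have sp: "path (z, take i as)" "path (ptgt t (z, take i as), drop i as)"
        using True path_append[of z "take i as" "drop i as"] by auto
      have "F (z, as) = F (ptgt t (z, take i as), drop i as) + F (z, take i as)"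
        using Fadd[OF sp(1) sp(2)] by (simp add: add.commute)
      thus ?thesis by (simp add: algebra_simps)
    qed
    show ?thesis
      unfolding r Lam_def padd_def pmult_def using True
      by (simp del: ptgt.simps add: sum_distrib_left trm sum.distrib)
  qed
qed

lemma exists_der:
  assumes Fadd: "\<And>p q. path p \<Longrightarrow> path q \<Longrightarrow> fst q = ptgt t p \<Longrightarrow> F (fst p, snd p @ snd q) = F p + F q"
    and Fmin: "\<And>\<rho> u v. minimal_relation Q0 Q1 s t I \<rho> \<Longrightarrow> \<rho> u \<noteq> 0 \<Longrightarrow> \<rho> v \<noteq> 0 \<Longrightarrow> F u = F v"
  shows "\<exists>D0\<in>Der. \<forall>u. path u \<longrightarrow> D0 (b u) = sc (F u) (b u)"
proof -
  define D0 where "D0 a = \<nu> (Lam F (SOME x. x \<in> PA \<and> \<nu> x = a))" for a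
  have key: "D0 (\<nu> x) = \<nu> (Lam F x)" if x: "x \<in> PA" for x
  proof -
    define y where "y = (SOME y. y \<in> PA \<and> \<nu> y = \<nu> x)"
    have y: "y \<in> PA \<and> \<nu> y = \<nu> x" unfolding y_def by (rule someI[of _ x]) (simp add: x)
    have d: "(\<lambda>p. y p - x p) \<in> I" using y x nu_eq_diff by blast
    have "Lam F (\<lambda>p. y p - x p) \<in> I" using Lam_I[OF Fmin d] .
    moreover have "Lam F y = padd (Lam F (\<lambda>p. y p - x p)) (Lam F x)"
      by (rule ext) (simp add: Lam_def padd_def algebra_simps)
    ultimately have "\<nu> (Lam F y) = \<nu> (Lam F x)"
      using x d by (simp add: pres_add I_iff)
    thus ?thesis unfolding D0_def y_def[symmetric] .
  qed
  have Fz: "F (x, []) = 0" if "x \<in> Q0" for x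
  proof -
    have "F (x, [] @ []) = F (x, []) + F (x, [])" using Fadd[of "(x, [])" "(x, [])"] that triv_path by simp
    hence "F (x, []) + 0 = F (x, []) + F (x, [])" by simp
    thus ?thesis using add_left_imp_eq by metis
  qed
  have "D0 \<in> Der"
  proof (rule DerI)
    show "lin D0" unfolding lin_def
    proof (intro conjI allI)
      fix a1 a2
      obtain x1 x2 where x: "x1 \<in> PA" "a1 = \<nu> x1" "x2 \<in> PA" "a2 = \<nu> x2" using pres_surj by metis
      have "D0 (a1 + a2) = D0 (\<nu> (padd x1 x2))" using x by (simp add: pres_add)
      also have "\<dots> = \<nu> (Lam F (padd x1 x2))" using x by (simp add: key)
      also have "\<dots> = D0 a1 + D0 a2" using x by (simp add: key Lam_padd pres_add)
      finally show "D0 (a1 + a2) = D0 a1 + D0 a2" .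
    next
      fix c a
      obtain x1 where x: "x1 \<in> PA" "a = \<nu> x1" using pres_surj by metis
      have "D0 (sc c a) = D0 (\<nu> (psmult c x1))" using x by (simp add: pres_smult)
      also have "\<dots> = \<nu> (Lam F (psmult c x1))" using x by (simp add: key)
      also have "\<dots> = sc c (D0 a)" using x by (simp add: key Lam_psmult pres_smult)
      finally show "D0 (sc c a) = sc c (D0 a)" .
    qed
  next
    fix a1 a2
    obtain x1 x2 where x: "x1 \<in> PA" "a1 = \<nu> x1" "x2 \<in> PA" "a2 = \<nu> x2" using pres_surj by metis
    have "D0 (a1 * a2) = D0 (\<nu> (pmult Q0 Q1 s t x1 x2))" using x by (simp add: pres_mult)
    also have "\<dots> = \<nu> (Lam F (pmult Q0 Q1 s t x1 x2))" by (simp add: key)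
    also have "\<dots> = D0 a1 * a2 + a1 * D0 a2"
      using x by (simp add: key Lam_pmult[OF Fadd] pres_add pres_mult)
    finally show "D0 (a1 * a2) = D0 a1 * a2 + a1 * D0 a2" .
  next
    fix x assume x: "x \<in> Q0"
    have "D0 (e x) = \<nu> (Lam F (pbasis (x, [])))" unfolding idem_def using x triv_path by (simp add: key)
    also have "\<dots> = 0" using x triv_path by (simp add: Lam_pbasis pres_smult Fz)
    finally show "D0 (e x) = 0" .
  qed
  moreover have "\<forall>u. path u \<longrightarrow> D0 (b u) = sc (F u) (b u)"
    by (simp add: key Lam_pbasis pres_smult)
  ultimately show ?thesis by blast
qed


lemma Lam_D:
  assumes D: "lin D" and Db: "\<And>u. path u \<Longrightarrow> D (b u) = sc (F u) (b u)" and x: "x \<in> PA"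
  shows "\<nu> (Lam F x) = D (\<nu> x)"
proof -
  have "\<nu> (Lam F x) = (\<Sum>p\<in>PS. sc (Lam F x p) (b p))" using nu_expand[OF Lam_PA[OF x]] .
  also have "\<dots> = (\<Sum>p\<in>PS. sc (x p) (D (b p)))"
    by (rule sum.cong) (auto simp: Db Lam_def mult.commute)
  also have "\<dots> = D (\<Sum>p\<in>PS. sc (x p) (b p))" using D by (simp add: lin_sum lin_sc)
  also have "\<dots> = D (\<nu> x)" using nu_expand[OF x] by simp
  finally show ?thesis .
qed

lemma level_I:
  assumes LI: "\<And>x. x \<in> I \<Longrightarrow> Lam F x \<in> I"
  shows "x \<in> I \<Longrightarrow> (\<lambda>p. if F p = \<mu> then x p else 0) \<in> I"
proof (induction "card (F ` {p. x p \<noteq> 0})" arbitrary: x rule: less_induct)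
  case less
  have xPA: "x \<in> PA" using less.prems by (simp add: I_iff)
  have fin: "finite {p. x p \<noteq> 0}" using supp_PS[OF xPA] finite_PS by (rule finite_subset)
  show ?case
  proof (cases "\<exists>\<mu>'. \<mu>' \<in> F ` {p. x p \<noteq> 0} \<and> \<mu>' \<noteq> \<mu>")
    case False
    hence "(\<lambda>p. if F p = \<mu> then x p else 0) = x" by (intro ext) auto
    thus ?thesis using less.prems by simp
  next
    case True
    then obtain \<mu>' where mu: "\<mu>' \<in> F ` {p. x p \<noteq> 0}" "\<mu>' \<noteq> \<mu>" by blast
    define y where "y = padd (Lam F x) (psmult (- \<mu>') x)"
    have yI: "y \<in> I" unfolding y_def using less.prems LI by (intro I_add I_smult) auto
    have yv: "y p = (F p - \<mu>') * x p" for p by (simp add: y_def padd_def psmult_def Lam_def algebra_simps)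
    have "F ` {p. y p \<noteq> 0} \<subseteq> F ` {p. x p \<noteq> 0} - {\<mu>'}" by (auto simp: yv)
    hence "F ` {p. y p \<noteq> 0} \<subset> F ` {p. x p \<noteq> 0}" using mu by blast
    hence c: "card (F ` {p. y p \<noteq> 0}) < card (F ` {p. x p \<noteq> 0})"
      using fin by (intro psubset_card_mono) auto
    have "(\<lambda>p. if F p = \<mu> then y p else 0) \<in> I" using less.hyps[OF c yI] .
    hence "psmult (inverse (\<mu> - \<mu>')) (\<lambda>p. if F p = \<mu> then y p else 0) \<in> I" by (rule I_smult)
    moreover have "psmult (inverse (\<mu> - \<mu>')) (\<lambda>p. if F p = \<mu> then y p else 0) = (\<lambda>p. if F p = \<mu> then x p else 0)"
      using mu(2) by (intro ext) (simp add: psmult_def yv)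
    ultimately show ?thesis by simp
  qed
qed

lemma minrel_const:
  assumes LI: "\<And>x. x \<in> I \<Longrightarrow> Lam F x \<in> I"
    and m: "minimal_relation Q0 Q1 s t I \<rho>" and u: "\<rho> u \<noteq> 0" and v: "\<rho> v \<noteq> 0"
  shows "F v = F u"
proof (rule ccontr)
  assume nv: "F v \<noteq> F u"
  have rI: "\<rho> \<in> I" using m by (simp add: minimal_relation_def)
  define S where "S = {r. \<rho> r \<noteq> 0 \<and> F r = F u}"
  have "S \<noteq> {}" using u unfolding S_def by blast
  moreover have "S \<subset> {p. \<rho> p \<noteq> 0}" using v nv unfolding S_def by blast
  ultimately have "(\<lambda>p. if p \<in> S then \<rho> p else 0) \<notin> I"
    using m by (simp add: minimal_relation_def)
  moreover have "(\<lambda>p. if p \<in> S then \<rho> p else 0) = (\<lambda>p. if F p = F u then \<rho> p else 0)"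
    by (rule ext) (simp add: S_def)
  ultimately show False using level_I[OF LI rI] by simp
qed

lemma diag_arrow:
  assumes con: "constricted Q0 Q1 s t sc \<nu>" and D: "D \<in> Der" and a: "\<alpha> \<in> Q1"
  shows "\<exists>c. D (b (s \<alpha>, [\<alpha>])) = sc c (b (s \<alpha>, [\<alpha>]))"
proof -
  define V where "V = {e (t \<alpha>) * a * e (s \<alpha>) | a. True}"
  have dim: "vs.dim V = 1" using con a unfolding constricted_def V_def by blast
  have st: "s \<alpha> \<in> Q0" "t \<alpha> \<in> Q0" using st_Q0[OF a] by auto
  have pa: "path (s \<alpha>, [\<alpha>])" using st a by (simp add: is_path_def)
  define v where "v = b (s \<alpha>, [\<alpha>])"
  have vv: "e (t \<alpha>) * v * e (s \<alpha>) = v"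
    unfolding v_def using e_left[OF st(2) pa] e_right[OF st(1) pa] by simp
  have vV: "v \<in> V" unfolding V_def using vv by (metis (mono_tags, lifting) mem_Collect_eq)
  have "D v = D (e (t \<alpha>) * v * e (s \<alpha>))" using vv by simp
  also have "\<dots> = e (t \<alpha>) * D v * e (s \<alpha>)"
    using D st by (simp add: der_mult der_e algebra_simps)
  finally have DvV: "D v \<in> V" unfolding V_def by (metis (mono_tags, lifting) mem_Collect_eq)
  obtain B where B: "B \<subseteq> V" "vs.independent B" "V \<subseteq> vs.span B" "card B = vs.dim V"
    by (rule vs.basis_exists)
  then obtain \<beta> where "B = {\<beta>}" using dim card_1_singletonE by metis
  hence sp: "V \<subseteq> range (\<lambda>k. sc k \<beta>)" using B(3) vs.span_singleton by simp
  obtain c1 where c1: "v = sc c1 \<beta>" using vV sp by blast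
  obtain c2 where c2: "D v = sc c2 \<beta>" using DvV sp by blast
  have "v \<noteq> 0" unfolding v_def by (rule arrow_nonzero[OF pa])
  hence "c1 \<noteq> 0" using c1 by auto
  hence "D v = sc (c2 / c1) v" using c1 c2 by simp
  thus ?thesis unfolding v_def by blast
qed


definition lam1 :: "('a \<Rightarrow> 'a) \<Rightarrow> 'e \<Rightarrow> 'k" where
  "lam1 D \<alpha> = (SOME c. D (b (s \<alpha>, [\<alpha>])) = sc c (b (s \<alpha>, [\<alpha>])))"

definition lamD :: "('a \<Rightarrow> 'a) \<Rightarrow> 'v \<times> 'e list \<Rightarrow> 'k" where
  "lamD D p = sum_list (map (lam1 D) (snd p))"

lemma D_diag:
  assumes con: "constricted Q0 Q1 s t sc \<nu>" and D: "D \<in> Der"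
  shows "path u \<Longrightarrow> D (b u) = sc (lamD D u) (b u)"
proof -
  obtain x as where u: "u = (x, as)" by (cases u)
  have "path (x, as) \<Longrightarrow> D (b (x, as)) = sc (lamD D (x, as)) (b (x, as))"
  proof (induction as rule: rev_induct)
    case Nil
    hence "x \<in> Q0" by (simp add: is_path_def)
    thus ?case using der_e[OF D] by (simp add: lamD_def idem_def)
  next
    case (snoc \<alpha> as)
    have p1: "path (x, as)" and p2: "path (ptgt t (x, as), [\<alpha>])" using snoc.prems path_append by auto
    have a: "\<alpha> \<in> Q1" and sa: "s \<alpha> = ptgt t (x, as)" using p2 by (auto simp: is_path_def)
    have l1: "D (b (s \<alpha>, [\<alpha>])) = sc (lam1 D \<alpha>) (b (s \<alpha>, [\<alpha>]))"
      unfolding lam1_def using diag_arrow[OF con D a] by (rule someI_ex)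
    have bm: "b (s \<alpha>, [\<alpha>]) * b (x, as) = b (x, as @ [\<alpha>])"
      using bmult[OF p1, of "(s \<alpha>, [\<alpha>])"] p2 sa by simp
    have "D (b (x, as @ [\<alpha>])) = D (b (s \<alpha>, [\<alpha>])) * b (x, as) + b (s \<alpha>, [\<alpha>]) * D (b (x, as))"
      using der_mult[OF D] bm by metis
    also have "\<dots> = sc (lam1 D \<alpha>) (b (x, as @ [\<alpha>])) + sc (lamD D (x, as)) (b (x, as @ [\<alpha>]))"
      unfolding l1 snoc.IH[OF p1] sc_mult_left[symmetric] sc_mult_right[symmetric] bm ..
    also have "\<dots> = sc (lamD D (x, as @ [\<alpha>])) (b (x, as @ [\<alpha>]))"
      by (simp add: lamD_def vs.scale_left_distrib[symmetric] add.commute)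
    finally show ?case .
  qed
  thus "path u \<Longrightarrow> D (b u) = sc (lamD D u) (b u)" using u by simp
qed


lemma lin_plus: "lin D1 \<Longrightarrow> lin D2 \<Longrightarrow> lin (\<lambda>a. D1 a + D2 a)"
  by (simp add: lin_def vs.scale_right_distrib algebra_simps)
lemma lin_minus: "lin D1 \<Longrightarrow> lin D2 \<Longrightarrow> lin (\<lambda>a. D1 a - D2 a)"
  by (simp add: lin_def vs.scale_right_diff_distrib algebra_simps)
lemma lin_comp: "lin D1 \<Longrightarrow> lin D2 \<Longrightarrow> lin (\<lambda>a. D1 (D2 a))"
  by (simp add: lin_def)
lemma lin_zero_fun: "lin (\<lambda>a. 0)" by (simp add: lin_def)

lemma Der_add: assumes "D1 \<in> Der" "D2 \<in> Der" shows "(\<lambda>a. D1 a + D2 a) \<in> Der"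
proof (rule DerI)
  show "lin (\<lambda>a. D1 a + D2 a)" using assms by (intro lin_plus der_lin)
  fix x y show "D1 (x * y) + D2 (x * y) = (D1 x + D2 x) * y + x * (D1 y + D2 y)"
    using assms by (simp add: der_mult algebra_simps)
next
  fix x assume "x \<in> Q0" thus "D1 (e x) + D2 (e x) = 0" using assms by (simp add: der_e)
qed

lemma Der_smult: assumes "D \<in> Der" shows "(\<lambda>a. sc c (D a)) \<in> Der"
proof (rule DerI)
  show "lin (\<lambda>a. sc c (D a))" using der_lin[OF assms]
    by (simp add: lin_def vs.scale_right_distrib vs.scale_left_commute)
  fix x y show "sc c (D (x * y)) = sc c (D x) * y + x * sc c (D y)"
    using assms by (simp add: der_mult vs.scale_right_distrib sc_mult_left[symmetric] sc_mult_right[symmetric])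
next
  fix x assume "x \<in> Q0" thus "sc c (D (e x)) = 0" using assms by (simp add: der_e)
qed

end

context qsg
begin

lemma theta_term: "path u \<Longrightarrow>
  f (hc (wconcat (wconcat (\<gamma> (fst u)) (path_walk u)) (winv s t (\<gamma> (ptgt t u))))) = Fw f (path_walk u)"
  using path_walk_walk[of u] by (simp add: Fw_def loop_def)

lemma theta_char:
  assumes D0: "D0 \<in> Der" and f: "\<And>u. path u \<Longrightarrow> D0 (b u) = sc (Fw f (path_walk u)) (b u)"
  shows "theta Q0 Q1 s t sc \<nu> \<gamma> f = der_class Q0 sc \<nu> D0"
proof -
  have uniq: "D0' = D0" if "D0' \<in> Der" "\<forall>u. path u \<longrightarrow> D0' (b u) = sc (f (hc (wconcat (wconcat (\<gamma> (fst u)) (path_walk u)) (winv s t (\<gamma> (ptgt t u)))))) (b u)" for D0'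
  proof (rule lin_eq[OF der_lin[OF that(1)] der_lin[OF D0]])
    fix u assume u: "path u"
    have "D0' (b u) = sc (f (hc (wconcat (wconcat (\<gamma> (fst u)) (path_walk u)) (winv s t (\<gamma> (ptgt t u)))))) (b u)"
      using that u by blast
    also have "\<dots> = sc (Fw f (path_walk u)) (b u)" by (simp only: theta_term[OF u])
    also have "\<dots> = D0 (b u)" using f[OF u] by simp
    finally show "D0' (b u) = D0 (b u)" .
  qed
  have ex: "\<forall>u. path u \<longrightarrow> D0 (b u) = sc (f (hc (wconcat (wconcat (\<gamma> (fst u)) (path_walk u)) (winv s t (\<gamma> (ptgt t u)))))) (b u)"
    using theta_term f by simp
  show ?thesis unfolding theta_def der_class_def
    using uniq ex D0 by blast
qed

lemma hom_der:
  assumes f: "f \<in> hom G kplus"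
  shows "\<exists>D0\<in>Der. \<forall>u. path u \<longrightarrow> D0 (b u) = sc (Fw f (path_walk u)) (b u)"
proof (rule exists_der)
  fix p q assume p: "path p" and q: "path q" and j: "fst q = ptgt t p"
  show "Fw f (path_walk (fst p, snd p @ snd q)) = Fw f (path_walk p) + Fw f (path_walk q)"
    unfolding path_walk_concat using path_walk_walk[OF p] path_walk_walk[OF q] j
    by (intro Fw_concat f) auto
next
  fix \<rho> u v assume "minimal_relation Q0 Q1 s t I \<rho>" "\<rho> u \<noteq> 0" "\<rho> v \<noteq> 0"
  hence "hmt (path_walk u) (path_walk v)" by (rule h_rel)
  thus "Fw f (path_walk u) = Fw f (path_walk v)" by (rule Fw_homot)
qed

lemma conj1: "f \<in> hom G kplus \<Longrightarrow> theta Q0 Q1 s t sc \<nu> \<gamma> f \<in> HH1 Q0 sc \<nu>"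
  using hom_der theta_char unfolding HH1_def by blast

lemma self_class: "D \<in> Der \<Longrightarrow> D \<in> der_class Q0 sc \<nu> D"
  unfolding der_class_def using Inn_zero by simp

lemma conj2:
  assumes f: "f \<in> hom G kplus" and g: "g \<in> hom G kplus"
    and eq: "theta Q0 Q1 s t sc \<nu> \<gamma> f = theta Q0 Q1 s t sc \<nu> \<gamma> g" and X: "X \<in> carrier G"
  shows "f X = g X"
proof -
  obtain Df where Df: "Df \<in> Der" "\<And>u. path u \<Longrightarrow> Df (b u) = sc (Fw f (path_walk u)) (b u)"
    using hom_der[OF f] by blast
  obtain Dg where Dg: "Dg \<in> Der" "\<And>u. path u \<Longrightarrow> Dg (b u) = sc (Fw g (path_walk u)) (b u)"
    using hom_der[OF g] by blast
  have "Df \<in> der_class Q0 sc \<nu> Dg"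
    using self_class[OF Df(1)] eq theta_char[OF Df] theta_char[OF Dg] by simp
  hence "(\<lambda>a. Df a - Dg a) \<in> Inn" by (simp add: der_class_def)
  then obtain c where c: "(\<lambda>a. Df a - Dg a) = (\<lambda>a. (\<Sum>x\<in>Q0. sc (c x) (e x)) * a - a * (\<Sum>x\<in>Q0. sc (c x) (e x)))"
    unfolding Inn_iff by blast
  have arr: "Fw f (s \<alpha>, [(\<alpha>, True)]) - Fw g (s \<alpha>, [(\<alpha>, True)]) = c (t \<alpha>) - c (s \<alpha>)" if a: "\<alpha> \<in> Q1" for \<alpha>
  proof -
    have st: "s \<alpha> \<in> Q0" "t \<alpha> \<in> Q0" using st_Q0[OF a] by auto
    have pa: "path (s \<alpha>, [\<alpha>])" using st a by (simp add: is_path_def)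
    have pw: "path_walk (s \<alpha>, [\<alpha>]) = (s \<alpha>, [(\<alpha>, True)])" by (simp add: path_walk_def)
    have "Df (b (s \<alpha>, [\<alpha>])) - Dg (b (s \<alpha>, [\<alpha>])) = sc (c (t \<alpha>) - c (s \<alpha>)) (b (s \<alpha>, [\<alpha>]))"
      using fun_cong[OF c, of "b (s \<alpha>, [\<alpha>])"] inner_b[OF pa, of c] by simp
    hence "sc (Fw f (s \<alpha>, [(\<alpha>, True)]) - Fw g (s \<alpha>, [(\<alpha>, True)]) - (c (t \<alpha>) - c (s \<alpha>))) (b (s \<alpha>, [\<alpha>])) = 0"
      using Df(2)[OF pa] Dg(2)[OF pa] pw by (simp add: vs.scale_left_diff_distrib)
    thus ?thesis using arrow_nonzero[OF pa] by simp
  qed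
  have step: "Fw f (x, [st]) - Fw g (x, [st]) = c (step_tgt s t st) - c x" if w: "walk (x, [st])" for x st
  proof -
    obtain \<alpha> bb where st: "st = (\<alpha>, bb)" by (cases st)
    have a: "\<alpha> \<in> Q1" and x: "step_src s t st = x" using w st by (auto simp: is_walk_def)
    show ?thesis
    proof (cases bb)
      case True thus ?thesis using arr[OF a] x st by simp
    next
      case False
      have xt: "x = t \<alpha>" using x st False by simp
      have sw: "walk (s \<alpha>, [(\<alpha>, True)])" "walk (t \<alpha>, [(\<alpha>, False)])" using a st_Q0[OF a] by (auto simp: is_walk_def)
      have "hmt (t \<alpha>, [(\<alpha>, False), (\<alpha>, True)]) (t \<alpha>, [])" by (rule h_inv1) (rule a)
      hence z: "Fw h (t \<alpha>, [(\<alpha>, False), (\<alpha>, True)]) = 0" if "h \<in> hom G kplus" for h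
      proof -
        have "Fw h (t \<alpha>, [(\<alpha>, False), (\<alpha>, True)]) = Fw h (t \<alpha>, [])"
          by (rule Fw_homot) (rule \<open>hmt (t \<alpha>, [(\<alpha>, False), (\<alpha>, True)]) (t \<alpha>, [])\<close>)
        also have "\<dots> = 0" using Fw_triv[OF that] st_Q0[OF a] by blast
        finally show ?thesis .
      qed
      have "Fw h (t \<alpha>, [(\<alpha>, False), (\<alpha>, True)]) = Fw h (t \<alpha>, [(\<alpha>, False)]) + Fw h (s \<alpha>, [(\<alpha>, True)])"
        if "h \<in> hom G kplus" for h
        using Fw_concat[OF that sw(2) sw(1)] by (simp add: wconcat_def)
      hence zz: "Fw h (t \<alpha>, [(\<alpha>, False)]) = - Fw h (s \<alpha>, [(\<alpha>, True)])" if "h \<in> hom G kplus" for h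
        using z[OF that] that by (simp add: eq_neg_iff_add_eq_0)
      have "Fw f (t \<alpha>, [(\<alpha>, False)]) = - Fw f (s \<alpha>, [(\<alpha>, True)])"
        "Fw g (t \<alpha>, [(\<alpha>, False)]) = - Fw g (s \<alpha>, [(\<alpha>, True)])"
        using zz f g by blast+
      thus ?thesis using arr[OF a] xt st False by (simp add: algebra_simps)
    qed
  qed
  have walks: "walk w \<Longrightarrow> Fw f w - Fw g w = c (wtgt s t w) - c (fst w)" for w
  proof (induction "snd w" arbitrary: w)
    case Nil
    obtain x where w: "w = (x, [])" using Nil.hyps by (metis prod.collapse)
    have "x \<in> Q0" using Nil.prems w by (simp add: walk_Nil)
    thus ?case using w Fw_triv[OF f] Fw_triv[OF g] by simp
  next
    case (Cons st sts)
    obtain x where w: "w = (x, st # sts)" using Cons.hyps(2) by (metis prod.collapse)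
    define y where "y = step_tgt s t st"
    have w2: "walk (y, sts)" and h1: "x \<in> Q0 \<and> fst st \<in> Q1 \<and> step_src s t st = x"
      using Cons.prems unfolding w walk_Cons y_def by blast+
    have "y \<in> Q0" using w2 walk_fst by force
    hence w1: "walk (x, [st])" using h1 unfolding walk_Cons y_def by (simp add: walk_Nil)
    have wc: "w = wconcat (x, [st]) (y, sts)" by (simp add: w wconcat_def)
    have j: "wtgt s t (x, [st]) = fst (y, sts)" by (simp add: y_def)
    have IH: "Fw f (y, sts) - Fw g (y, sts) = c (wtgt s t (y, sts)) - c y"
      using Cons.hyps(1)[of "(y, sts)"] w2 by simp
    have tw: "wtgt s t w = wtgt s t (y, sts)" unfolding wc by (rule wtgt_concat) (simp add: y_def)
    have "Fw f w - Fw g w = (Fw f (x, [st]) - Fw g (x, [st])) + (Fw f (y, sts) - Fw g (y, sts))"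
      unfolding wc using Fw_concat[OF f w1 w2 j] Fw_concat[OF g w1 w2 j] by simp
    also have "\<dots> = c (wtgt s t w) - c (fst w)" using step[OF w1] IH tw w y_def by simp
    finally show ?case .
  qed
  obtain w where w: "X = hc w" "walk w" "fst w = x0" "wtgt s t w = x0" using X unfolding carrier_G by blast
  have "f X - g X = 0" using walks[OF w(2)] Fw_closed[OF w(2-4)] w by simp
  thus ?thesis by simp
qed


definition Lw :: "('a \<Rightarrow> 'a) \<Rightarrow> ('v,'e) walk \<Rightarrow> 'k" where
  "Lw D w = sum_list (map (\<lambda>(\<alpha>, bb). if bb then lam1 D \<alpha> else - lam1 D \<alpha>) (snd w))"

lemma Lw_concat: "Lw D (wconcat w1 w2) = Lw D w1 + Lw D w2"
  by (simp add: Lw_def wconcat_def)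

lemma Lw_winv: "Lw D (winv s t w) = - Lw D w"
proof -
  have "sum_list (map (\<lambda>(\<alpha>, bb). if bb then lam1 D \<alpha> else - lam1 D \<alpha>) (rev (map (\<lambda>(a, bb). (a, \<not> bb)) sts)))
    = - sum_list (map (\<lambda>(\<alpha>, bb). if bb then lam1 D \<alpha> else - lam1 D \<alpha>) sts)" for sts :: "('e \<times> bool) list"
    by (induction sts) auto
  thus ?thesis by (simp add: Lw_def winv_def)
qed

lemma Lw_path: "Lw D (path_walk u) = lamD D u"
  by (simp add: Lw_def path_walk_def lamD_def comp_def)

lemma conj3:
  assumes con: "constricted Q0 Q1 s t sc \<nu>" and C: "C \<in> HH1 Q0 sc \<nu>"
  shows "\<exists>f \<in> hom G kplus. theta Q0 Q1 s t sc \<nu> \<gamma> f = C"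
proof -
  obtain D where D: "D \<in> Der" and CD: "C = der_class Q0 sc \<nu> D" using C unfolding HH1_def by blast
  note diag = D_diag[OF con D]
  have LI: "Lam (lamD D) x \<in> I" if "x \<in> I" for x
  proof -
    have xPA: "x \<in> PA" and x0: "\<nu> x = 0" using that by (auto simp: I_iff)
    have "\<nu> (Lam (lamD D) x) = D (\<nu> x)" using Lam_D[OF der_lin[OF D] diag xPA] .
    thus ?thesis using x0 lin_zero[OF der_lin[OF D]] xPA by (simp add: I_iff)
  qed
  have Lh: "hmt w w' \<Longrightarrow> Lw D w = Lw D w'" for w w'
  proof (induction rule: homot.induct)
    case (h_concat w w' a b') thus ?case by (simp add: Lw_concat)
  next
    case (h_rel \<rho> u v) thus ?case using minrel_const[OF LI h_rel(1-3)] by (simp add: Lw_path)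
  qed (auto simp: Lw_def)
  define f where "f X = Lw D (SOME w. w \<in> X)" for X :: "('v,'e) walk set"
  have fhc: "f (hc w) = Lw D w" if "walk w" for w
  proof -
    have "(SOME w'. w' \<in> hc w) \<in> hc w" using hclass_mem[OF that] by (rule someI)
    hence "hmt (SOME w'. w' \<in> hc w) w" by (simp add: hclass_mem_iff)
    thus ?thesis unfolding f_def by (rule Lh)
  qed
  have fhom: "f \<in> hom G kplus"
  proof (rule homI)
    fix X show "f X \<in> carrier kplus" by (simp add: kplus_def)
  next
    fix X Y assume X: "X \<in> carrier G" and Y: "Y \<in> carrier G"
    obtain A where A: "X = hc A" "walk A" "fst A = x0" "wtgt s t A = x0" using X unfolding carrier_G by blast
    obtain B where B: "Y = hc B" "walk B" "fst B = x0" "wtgt s t B = x0" using Y unfolding carrier_G by blast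
    have j: "wtgt s t A = fst B" using A B by simp
    have "X \<otimes>\<^bsub>G\<^esub> Y = hc (wconcat A B)" using A B mult_G[OF A(2) B(2) j] by simp
    moreover have "walk (wconcat A B)" using A B j by (intro walk_concat) auto
    ultimately show "f (X \<otimes>\<^bsub>G\<^esub> Y) = f X \<otimes>\<^bsub>kplus\<^esub> f Y"
      using A B fhc by (simp add: kplus_def Lw_concat)
  qed
  obtain D0 where D0: "D0 \<in> Der" "\<And>u. path u \<Longrightarrow> D0 (b u) = sc (Fw f (path_walk u)) (b u)"
    using hom_der[OF fhom] by blast
  define c where "c z = - Lw D (\<gamma> z)" for z
  have Fwv: "Fw f w = Lw D (\<gamma> (fst w)) + Lw D w - Lw D (\<gamma> (wtgt s t w))" if "walk w" for w
    unfolding Fw_def using fhc[OF conjunct1[OF loop_walk[OF that]]]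
    by (simp add: loop_def Lw_concat Lw_winv)
  have diff: "(\<lambda>a. D0 a - D a) = (\<lambda>a. (\<Sum>x\<in>Q0. sc (c x) (e x)) * a - a * (\<Sum>x\<in>Q0. sc (c x) (e x)))"
  proof (rule lin_eq)
    show "lin (\<lambda>a. D0 a - D a)" using D D0 by (intro lin_minus der_lin)
    show "lin (\<lambda>a. (\<Sum>x\<in>Q0. sc (c x) (e x)) * a - a * (\<Sum>x\<in>Q0. sc (c x) (e x)))" by (rule inner_lin)
  next
    fix u assume u: "path u"
    note pw = path_walk_walk[OF u]
    have "D0 (b u) - D (b u) = sc (Fw f (path_walk u) - lamD D u) (b u)"
      using D0(2)[OF u] diag[OF u] by (simp add: vs.scale_left_diff_distrib)
    also have "Fw f (path_walk u) - lamD D u = c (ptgt t u) - c (fst u)"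
      using Fwv[OF conjunct1[OF pw]] pw by (simp add: Lw_path c_def)
    finally show "D0 (b u) - D (b u) = (\<Sum>x\<in>Q0. sc (c x) (e x)) * b u - b u * (\<Sum>x\<in>Q0. sc (c x) (e x))"
      using inner_b[OF u, of c] by simp
  qed
  hence dI: "(\<lambda>a. D0 a - D a) \<in> Inn" unfolding Inn_iff by (rule exI[of _ c])
  have "der_class Q0 sc \<nu> D0 = der_class Q0 sc \<nu> D"
  proof -
    have "(\<lambda>a. D' a - D0 a) \<in> Inn \<longleftrightarrow> (\<lambda>a. D' a - D a) \<in> Inn" for D'
    proof
      assume "(\<lambda>a. D' a - D0 a) \<in> Inn"
      from Inn_add[OF this dI] show "(\<lambda>a. D' a - D a) \<in> Inn" by simp
    next
      assume "(\<lambda>a. D' a - D a) \<in> Inn"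
      from Inn_diff[OF this dI] show "(\<lambda>a. D' a - D0 a) \<in> Inn" by simp
    qed
    thus ?thesis unfolding der_class_def by blast
  qed
  hence "theta Q0 Q1 s t sc \<nu> \<gamma> f = C" using theta_char[OF D0] CD by simp
  thus ?thesis using fhom by blast
qed

definition TT :: "(('v,'e) walk set \<Rightarrow> 'k) \<Rightarrow> 'v \<times> 'e list \<Rightarrow> 'k" where
  "TT f u = f (hc (wconcat (wconcat (\<gamma> (fst u)) (path_walk u)) (winv s t (\<gamma> (ptgt t u)))))"

lemma theta_iff: "D \<in> theta Q0 Q1 s t sc \<nu> \<gamma> f \<longleftrightarrow>
   D \<in> Der \<and> (\<exists>E\<in>Der. (\<forall>u. path u \<longrightarrow> E (b u) = sc (TT f u) (b u)) \<and> (\<lambda>a. D a - E a) \<in> Inn)"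
  unfolding theta_def TT_def by (rule mem_Collect_eq)

lemma conj4:
  assumes "D1 \<in> theta Q0 Q1 s t sc \<nu> \<gamma> f" "D2 \<in> theta Q0 Q1 s t sc \<nu> \<gamma> g"
  shows "(\<lambda>a. D1 a + D2 a) \<in> theta Q0 Q1 s t sc \<nu> \<gamma> (\<lambda>X. f X + g X)"
proof -
  obtain E1 where E1: "D1 \<in> Der" "E1 \<in> Der" "\<forall>u. path u \<longrightarrow> E1 (b u) = sc (TT f u) (b u)"
    "(\<lambda>a. D1 a - E1 a) \<in> Inn" using assms(1) unfolding theta_iff by blast
  obtain E2 where E2: "D2 \<in> Der" "E2 \<in> Der" "\<forall>u. path u \<longrightarrow> E2 (b u) = sc (TT g u) (b u)"
    "(\<lambda>a. D2 a - E2 a) \<in> Inn" using assms(2) unfolding theta_iff by blast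
  have a: "(\<lambda>a. D1 a + D2 a) \<in> Der" using E1 E2 by (intro Der_add)
  have b2: "(\<lambda>a. E1 a + E2 a) \<in> Der" using E1 E2 by (intro Der_add)
  have c: "\<forall>u. path u \<longrightarrow> E1 (b u) + E2 (b u) = sc (TT (\<lambda>X. f X + g X) u) (b u)"
    using E1(3) E2(3) by (simp add: vs.scale_left_distrib TT_def)
  have d: "(\<lambda>a. D1 a + D2 a - (E1 a + E2 a)) \<in> Inn"
    using Inn_add[OF E1(4) E2(4)] by (simp add: algebra_simps)
  show ?thesis unfolding theta_iff
    by (rule conjI[OF a], rule bexI[OF _ b2]) (use c d in simp)
qed

lemma conj5:
  assumes "D \<in> theta Q0 Q1 s t sc \<nu> \<gamma> f"
  shows "(\<lambda>a. sc c (D a)) \<in> theta Q0 Q1 s t sc \<nu> \<gamma> (\<lambda>X. c * f X)"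
proof -
  obtain E1 where E1: "D \<in> Der" "E1 \<in> Der" "\<forall>u. path u \<longrightarrow> E1 (b u) = sc (TT f u) (b u)"
    "(\<lambda>a. D a - E1 a) \<in> Inn" using assms(1) unfolding theta_iff by blast
  have a: "(\<lambda>a. sc c (D a)) \<in> Der" using E1 by (intro Der_smult)
  have b2: "(\<lambda>a. sc c (E1 a)) \<in> Der" using E1 by (intro Der_smult)
  have c: "\<forall>u. path u \<longrightarrow> sc c (E1 (b u)) = sc (TT (\<lambda>X. c * f X) u) (b u)"
    using E1(3) by (simp add: TT_def)
  have d: "(\<lambda>a. sc c (D a) - sc c (E1 a)) \<in> Inn"
    using Inn_smult[OF E1(4), of c] by (simp add: vs.scale_right_diff_distrib)
  show ?thesis unfolding theta_iff
    by (rule conjI[OF a], rule bexI[OF _ b2]) (use c d in simp)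
qed

lemma conj6:
  assumes con: "constricted Q0 Q1 s t sc \<nu>" and D1: "D1 \<in> Der" and D2: "D2 \<in> Der"
  shows "(\<lambda>a. D1 (D2 a) - D2 (D1 a)) \<in> Inn"
proof -
  have "(\<lambda>a. D1 (D2 a) - D2 (D1 a)) = (\<lambda>a. 0)"
  proof (rule lin_eq)
    show "lin (\<lambda>a. D1 (D2 a) - D2 (D1 a))"
      by (rule lin_minus[OF lin_comp[OF der_lin[OF D1] der_lin[OF D2]] lin_comp[OF der_lin[OF D2] der_lin[OF D1]]])
    show "lin (\<lambda>a. 0)" by (rule lin_zero_fun)
  next
    fix u assume u: "path u"
    have 1: "D1 (D2 (b u)) = sc (lamD D2 u * lamD D1 u) (b u)"
      unfolding D_diag[OF con D2 u] lin_sc[OF der_lin[OF D1]] D_diag[OF con D1 u] by simp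
    have 2: "D2 (D1 (b u)) = sc (lamD D1 u * lamD D2 u) (b u)"
      unfolding D_diag[OF con D1 u] lin_sc[OF der_lin[OF D2]] D_diag[OF con D2 u] by simp
    show "D1 (D2 (b u)) - D2 (D1 (b u)) = 0" unfolding 1 2 by (simp add: mult.commute)
  qed
  thus ?thesis using Inn_zero by simp
qed

end

theorem proposition2p7:
  fixes Q0 :: "'v set" and Q1 :: "'e set" and s t :: "'e \<Rightarrow> 'v"
    and sc :: "'k::alg_closed_field \<Rightarrow> 'a::ring_1 \<Rightarrow> 'a"
    and \<nu> :: "('v,'e,'k) pelem \<Rightarrow> 'a"
    and x0 :: 'v and T :: "'e set" and \<gamma> :: "'v \<Rightarrow> ('v,'e) walk"
  defines "I \<equiv> pkernel Q0 Q1 s t \<nu>"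
  assumes quiv: "quiver Q0 Q1 s t"
    and conn: "connected_quiver Q0 Q1 s t"
    and acyc: "acyclic_quiver Q0 Q1 s t"
    and alg: "k_algebra sc"
    and pres: "presentation Q0 Q1 s t sc \<nu>"
    and adm: "admissible Q0 Q1 s t I"
    and constr: "constricted Q0 Q1 s t sc \<nu>"
    and x0: "x0 \<in> Q0"
    and tree: "maximal_tree Q0 Q1 s t T"
    and gamma: "\<And>x. x \<in> Q0 \<Longrightarrow> is_walk Q0 T s t (\<gamma> x) \<and> fst (\<gamma> x) = x0 \<and> wtgt s t (\<gamma> x) = x \<and>
        (\<forall>w. is_walk Q0 T s t w \<and> fst w = x0 \<and> wtgt s t w = x \<longrightarrow> length (snd (\<gamma> x)) \<le> length (snd w))"
  shows "(\<forall>f \<in> hom (pi1 Q0 Q1 s t I x0) kplus. theta Q0 Q1 s t sc \<nu> \<gamma> f \<in> HH1 Q0 sc \<nu>)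
       \<and> (\<forall>f \<in> hom (pi1 Q0 Q1 s t I x0) kplus. \<forall>g \<in> hom (pi1 Q0 Q1 s t I x0) kplus.
            theta Q0 Q1 s t sc \<nu> \<gamma> f = theta Q0 Q1 s t sc \<nu> \<gamma> g
              \<longrightarrow> (\<forall>X \<in> carrier (pi1 Q0 Q1 s t I x0). f X = g X))
       \<and> (\<forall>C \<in> HH1 Q0 sc \<nu>. \<exists>f \<in> hom (pi1 Q0 Q1 s t I x0) kplus. theta Q0 Q1 s t sc \<nu> \<gamma> f = C)
       \<and> (\<forall>f \<in> hom (pi1 Q0 Q1 s t I x0) kplus. \<forall>g \<in> hom (pi1 Q0 Q1 s t I x0) kplus.
            \<forall>D1 \<in> theta Q0 Q1 s t sc \<nu> \<gamma> f. \<forall>D2 \<in> theta Q0 Q1 s t sc \<nu> \<gamma> g.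
              (\<lambda>a. D1 a + D2 a) \<in> theta Q0 Q1 s t sc \<nu> \<gamma> (\<lambda>X. f X + g X))
       \<and> (\<forall>f \<in> hom (pi1 Q0 Q1 s t I x0) kplus. \<forall>c. \<forall>D \<in> theta Q0 Q1 s t sc \<nu> \<gamma> f.
              (\<lambda>a. sc c (D a)) \<in> theta Q0 Q1 s t sc \<nu> \<gamma> (\<lambda>X. c * f X))
       \<and> (\<forall>D1 \<in> Der0 Q0 sc \<nu>. \<forall>D2 \<in> Der0 Q0 sc \<nu>.
            (\<lambda>a. D1 (D2 a) - D2 (D1 a)) \<in> Int0 Q0 sc \<nu>)"
  proof -
  have T: "T \<subseteq> Q1" using tree by (simp add: maximal_tree_def)
  interpret q: qs Q0 Q1 s t sc \<nu>
    using quiv acyc alg pres adm unfolding I_def by unfold_locales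
  have gw: "is_walk Q0 Q1 s t (\<gamma> x) \<and> fst (\<gamma> x) = x0 \<and> wtgt s t (\<gamma> x) = x" if x: "x \<in> Q0" for x
    using gamma[OF x] T unfolding is_walk_def by blast
  have "is_walk Q0 T s t (x0, [])" using x0 by (simp add: is_walk_def)
  hence "length (snd (\<gamma> x0)) \<le> 0" using gamma[OF x0] by fastforce
  hence g0: "\<gamma> x0 = (x0, [])" using gamma[OF x0] by (metis le_zero_eq length_0_conv prod.collapse)
  interpret g: qsg Q0 Q1 s t sc \<nu> x0 \<gamma>
    by unfold_locales (use x0 gw g0 in auto)
  have c1: "\<forall>f \<in> hom (pi1 Q0 Q1 s t (pkernel Q0 Q1 s t \<nu>) x0) kplus. theta Q0 Q1 s t sc \<nu> \<gamma> f \<in> HH1 Q0 sc \<nu>"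
    using g.conj1 by blast
  have c2: "\<forall>f \<in> hom (pi1 Q0 Q1 s t (pkernel Q0 Q1 s t \<nu>) x0) kplus. \<forall>g \<in> hom (pi1 Q0 Q1 s t (pkernel Q0 Q1 s t \<nu>) x0) kplus.
            theta Q0 Q1 s t sc \<nu> \<gamma> f = theta Q0 Q1 s t sc \<nu> \<gamma> g
              \<longrightarrow> (\<forall>X \<in> carrier (pi1 Q0 Q1 s t (pkernel Q0 Q1 s t \<nu>) x0). f X = g X)"
    using g.conj2 by blast
  have c3: "\<forall>C \<in> HH1 Q0 sc \<nu>. \<exists>f \<in> hom (pi1 Q0 Q1 s t (pkernel Q0 Q1 s t \<nu>) x0) kplus. theta Q0 Q1 s t sc \<nu> \<gamma> f = C"
    using g.conj3[OF constr] by blast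
  have c4: "\<forall>f \<in> hom (pi1 Q0 Q1 s t (pkernel Q0 Q1 s t \<nu>) x0) kplus. \<forall>g \<in> hom (pi1 Q0 Q1 s t (pkernel Q0 Q1 s t \<nu>) x0) kplus.
            \<forall>D1 \<in> theta Q0 Q1 s t sc \<nu> \<gamma> f. \<forall>D2 \<in> theta Q0 Q1 s t sc \<nu> \<gamma> g.
              (\<lambda>a. D1 a + D2 a) \<in> theta Q0 Q1 s t sc \<nu> \<gamma> (\<lambda>X. f X + g X)"
    using g.conj4 by blast
  have c5: "\<forall>f \<in> hom (pi1 Q0 Q1 s t (pkernel Q0 Q1 s t \<nu>) x0) kplus. \<forall>c. \<forall>D \<in> theta Q0 Q1 s t sc \<nu> \<gamma> f.
              (\<lambda>a. sc c (D a)) \<in> theta Q0 Q1 s t sc \<nu> \<gamma> (\<lambda>X. c * f X)"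
    using g.conj5 by blast
  have c6: "\<forall>D1 \<in> Der0 Q0 sc \<nu>. \<forall>D2 \<in> Der0 Q0 sc \<nu>.
            (\<lambda>a. D1 (D2 a) - D2 (D1 a)) \<in> Int0 Q0 sc \<nu>"
    using g.conj6[OF constr] by blast
  show ?thesis unfolding I_def using c1 c2 c3 c4 c5 c6 by (intro conjI)
qed

end
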